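(* Under (A1) and (A2): let $x\in\mathbb R$ and let $(x_n)$ be integers such that $x_n-n^{1/2}x$ stays bounded. Then \[ \lim_{n\to\infty}n^{-1/2}G_n(x_n,0)=\frac1{2\beta\sigma_a^2}\int_0^{2\sigma_a^2}\frac1{\sqrt{2\pi v}}\exp\Bigl\{-\frac{x^2}{2v}\Bigr\}dv. \]
   Context: Environment setup: Fix an integer $M\ge1$. $\mathcal P$ = probability vectors $u=(u(y):-M\le y\le M)$, with $u(y)=0$ for $|y|>M$. Environment $\omega=(\omega_{x,\tau})\in\Omega=\mathcal P^{\mathbb Z^2}$, $u^\omega_\tau(x,y)=\omega_{x,\tau}(y)$; under $\mathbb P$ (expectation $\mathbb E$) the $\omega_{x,\tau}$ are i.i.d. $p(0,j)=\mathbb Eu_0(0,j)$. (A1) no integer $h>1$ and $x$ with $\sum_kp(0,x+kh)=1$; (A2) $\mathbb P\{\max_ju_0(0,j)<1\}>0$. Constants: $V=\sum_jjp(0,j)$; $\sigma_a^2=\sum_x(x-V)^2p(0,x)$; $\lambda(t)=\mathbb E|\sum_xu^\omega_0(0,x)e^{itx}|^2$, $\bar\lambda(t)=|\sum_xp(0,x)e^{itx}|^2$, $\beta=\frac1{2\pi}\int_{-\pi}^\pi\frac{1-\lambda(t)}{1-\bar\lambda(t)}dt$. Difference walk: let $q(0,y)=\sum_{z}\mathbb E[u_0(0,z)u_0(0,z+y)]$ and, for $x\ne0$, $q(x,y)=\sum_zp(0,z)p(0,z+y-x)$ ($x,y\in\mathbb Z$); this is the annealed transition kernel of $Y_n=X_n-\tilde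 X_n$, the difference of two walks moving independently in a common environment. $q^k$ denotes the $k$-step kernel ($q^0(x,y)=\mathbf 1_{\{x=y\}}$) and $G_n(x,y)=\sum_{k=0}^nq^k(x,y)$. *)

theory Defs
  imports "HOL-Probability.Probability"
begin

text \<open>The law of a single environment site: a probability measure mu on random
  probability vectors u :: int => real (Borel sigma-algebra of the product topology).
  All quantities in the statement depend only on this one-site law.\<close>

definition prob_vector :: "nat \<Rightarrow> (int \<Rightarrow> real) \<Rightarrow> bool" where
  "prob_vector M u \<longleftrightarrow> (\<forall>y. 0 \<le> u y) \<and> (\<forall>y. \<bar>y\<bar> > int M \<longrightarrow> u y = 0)
      \<and> (\<Sum>y\<in>{-int M..int M}. u y) = 1"

definition env_law :: "nat \<Rightarrow> (int \<Rightarrow> real) measure \<Rightarrow> bool" where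
  "env_law M \<mu> \<longleftrightarrow> prob_space \<mu> \<and> sets \<mu> = sets borel \<and> (AE u in \<mu>. prob_vector M u)"

definition pker :: "(int \<Rightarrow> real) measure \<Rightarrow> int \<Rightarrow> real" where
  "pker \<mu> j = (\<integral>u. u j \<partial>\<mu>)"

definition Vel :: "(int \<Rightarrow> real) measure \<Rightarrow> real" where
  "Vel \<mu> = (\<Sum>\<^sub>\<infinity>j\<in>(UNIV::int set). of_int j * pker \<mu> j)"

definition sigma_a2 :: "(int \<Rightarrow> real) measure \<Rightarrow> real" where
  "sigma_a2 \<mu> = (\<Sum>\<^sub>\<infinity>x\<in>(UNIV::int set). (of_int x - Vel \<mu>)\<^sup>2 * pker \<mu> x)"

definition lam :: "(int \<Rightarrow> real) measure \<Rightarrow> real \<Rightarrow> real" where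
  "lam \<mu> t = (\<integral>u. (cmod (\<Sum>\<^sub>\<infinity>x\<in>(UNIV::int set). complex_of_real (u x) * cis (t * of_int x)))\<^sup>2 \<partial>\<mu>)"

definition lam_bar :: "(int \<Rightarrow> real) measure \<Rightarrow> real \<Rightarrow> real" where
  "lam_bar \<mu> t = (cmod (\<Sum>\<^sub>\<infinity>x\<in>(UNIV::int set). complex_of_real (pker \<mu> x) * cis (t * of_int x)))\<^sup>2"

definition beta :: "(int \<Rightarrow> real) measure \<Rightarrow> real" where
  "beta \<mu> = 1 / (2 * pi) * integral {-pi..pi} (\<lambda>t. (1 - lam \<mu> t) / (1 - lam_bar \<mu> t))"

text \<open>Transition kernel of the difference walk.\<close>
definition qker :: "(int \<Rightarrow> real) measure \<Rightarrow> int \<Rightarrow> int \<Rightarrow> real" where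
  "qker \<mu> x y = (if x = 0
     then (\<Sum>\<^sub>\<infinity>z\<in>(UNIV::int set). \<integral>u. u z * u (z + y) \<partial>\<mu>)
     else (\<Sum>\<^sub>\<infinity>z\<in>(UNIV::int set). pker \<mu> z * pker \<mu> (z + y - x)))"

fun qpow :: "(int \<Rightarrow> real) measure \<Rightarrow> nat \<Rightarrow> int \<Rightarrow> int \<Rightarrow> real" where
  "qpow \<mu> 0 x y = (if x = y then 1 else 0)"
| "qpow \<mu> (Suc k) x y = (\<Sum>\<^sub>\<infinity>w\<in>(UNIV::int set). qpow \<mu> k x w * qker \<mu> w y)"

definition Gn :: "(int \<Rightarrow> real) measure \<Rightarrow> nat \<Rightarrow> int \<Rightarrow> int \<Rightarrow> real" where
  "Gn \<mu> n x y = (\<Sum>k\<le>n. qpow \<mu> k x y)"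

definition A1 :: "(int \<Rightarrow> real) measure \<Rightarrow> bool" where
  "A1 \<mu> \<longleftrightarrow> \<not> (\<exists>h::int. \<exists>x::int. h > 1 \<and> (\<Sum>\<^sub>\<infinity>k\<in>(UNIV::int set). pker \<mu> (x + k * h)) = 1)"

definition A2 :: "nat \<Rightarrow> (int \<Rightarrow> real) measure \<Rightarrow> bool" where
  "A2 M \<mu> \<longleftrightarrow> measure \<mu> {u \<in> space \<mu>. Max ((\<lambda>j. u j) ` {-int M..int M}) < 1} > 0"

end

theory Submission
  imports Defs
begin


lemma infsum_fin_supp:
  fixes f :: "'a \<Rightarrow> 'b::{comm_monoid_add,t2_space}"
  assumes "finite S" "\<And>x. x \<notin> S \<Longrightarrow> f x = 0"
  shows "infsum f UNIV = sum f S"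
proof -
  have "infsum f UNIV = infsum f S" by (rule infsum_cong_neutral) (use assms in auto)
  then show ?thesis using assms by simp
qed

lemma sum_supp_eq:
  fixes f :: "'a \<Rightarrow> 'b::comm_monoid_add"
  assumes "finite A" "finite B" "\<And>w. w \<notin> A \<inter> B \<Longrightarrow> f w = 0"
  shows "sum f A = sum f B"
proof -
  have "sum f A = sum f (A \<inter> B)" by (rule sum.mono_neutral_right) (use assms in auto)
  also have "\<dots> = sum f B" by (rule sum.mono_neutral_left) (use assms in auto)
  finally show ?thesis .
qed

lemma sum_shift_supp:
  fixes f :: "int \<Rightarrow> 'a::comm_monoid_add"
  assumes "finite S" "finite T" "\<And>b. b \<notin> T \<Longrightarrow> f b = 0" "\<And>y. y \<notin> S \<Longrightarrow> f (z + y) = 0"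
  shows "(\<Sum>y\<in>S. f (z + y)) = sum f T"
proof -
  have "(\<Sum>y\<in>S. f (z + y)) = sum f ((+) z ` S)"
    by (subst sum.reindex) (auto simp: inj_on_def)
  also have "\<dots> = sum f T"
  proof (rule sum_supp_eq)
    show "finite ((+) z ` S)" using assms by simp
    show "finite T" by fact
    fix w assume w: "w \<notin> (+) z ` S \<inter> T"
    show "f w = 0"
    proof (cases "w \<in> T")
      case True
      then have "w \<notin> (+) z ` S" using w by blast
      then have "w - z \<notin> S" by (metis add_diff_cancel_left' add_diff_eq image_eqI diff_add_cancel)
      then show ?thesis using assms(4)[of "w - z"] by simp
    qed (use assms in auto)
  qed
  finally show ?thesis .
qed

locale envL =
  fixes M :: nat and \<mu> :: "(int \<Rightarrow> real) measure"
  assumes M1: "M \<ge> 1" and law: "env_law M \<mu>"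
begin

lemma ps: "prob_space \<mu>" using law by (simp add: env_law_def)

sublocale prob_space \<mu> by (rule ps)

lemma sets_eq: "sets \<mu> = sets borel" using law by (simp add: env_law_def)

lemma AEpv: "AE u in \<mu>. prob_vector M u" using law by (simp add: env_law_def)

lemma meas_eval[measurable]: "(\<lambda>u. u j) \<in> borel_measurable \<mu>"
  using measurable_product_coordinates[of j] unfolding measurable_cong_sets[OF sets_eq refl] .

definition IM :: "int set" where "IM = {- int M..int M}"
definition IM2 :: "int set" where "IM2 = {- 2 * int M..2 * int M}"

lemma fin_IM[simp]: "finite IM" "finite IM2" by (auto simp: IM_def IM2_def)

lemma AE_nonneg: "AE u in \<mu>. \<forall>y. 0 \<le> u y"
  using AEpv by eventually_elim (simp add: prob_vector_def)
lemma AE_zero: "AE u in \<mu>. \<forall>y. y \<notin> IM \<longrightarrow> u y = 0"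
  using AEpv by eventually_elim (auto simp: prob_vector_def IM_def)
lemma AE_sum: "AE u in \<mu>. sum u IM = 1"
  using AEpv by eventually_elim (auto simp: prob_vector_def IM_def)
lemma AE_le1: "AE u in \<mu>. \<forall>y. u y \<le> 1"
  using AE_nonneg AE_zero AE_sum
proof eventually_elim
  case (elim u)
  show ?case
  proof
    fix y
    show "u y \<le> 1"
    proof (cases "y \<in> IM")
      case True
      then have "u y \<le> sum u IM" using elim by (intro member_le_sum) auto
      then show ?thesis using elim by simp
    qed (use elim in auto)
  qed
qed

lemma int_eval: "integrable \<mu> (\<lambda>u. u j)"
  by (rule integrable_const_bound[where B=1]) (use AE_nonneg AE_le1 in \<open>auto\<close>)

lemma int_eval2: "integrable \<mu> (\<lambda>u. u a * u b)"
proof (rule integrable_const_bound[where B=1])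
  show "AE u in \<mu>. norm (u a * u b) \<le> 1"
    using AE_nonneg AE_le1
  proof eventually_elim
    case (elim u)
    then have "u a * u b \<le> 1 * 1" by (intro mult_mono) auto
    then show ?case using elim by simp
  qed
qed simp

abbreviation p where "p \<equiv> pker \<mu>"

definition E2 :: "int \<Rightarrow> int \<Rightarrow> real" where "E2 a b = (\<integral>u. u a * u b \<partial>\<mu>)"

lemma p_nonneg: "0 \<le> p j"
  unfolding pker_def by (rule integral_nonneg_AE) (use AE_nonneg in auto)

lemma p_zero: "j \<notin> IM \<Longrightarrow> p j = 0"
  unfolding pker_def by (rule integral_eq_zero_AE) (use AE_zero in auto)

lemma p_sum: "sum p IM = 1"
proof -
  have "(\<integral>u. (\<Sum>j\<in>IM. u j) \<partial>\<mu>) = (\<Sum>j\<in>IM. \<integral>u. u j \<partial>\<mu>)"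
    by (rule Bochner_Integration.integral_sum) (rule int_eval)
  then have "sum p IM = (\<integral>u. sum u IM \<partial>\<mu>)"
    unfolding pker_def by simp
  also have "\<dots> = (\<integral>u. 1 \<partial>\<mu>)"
    by (rule integral_cong_AE) (use AE_sum in auto)
  finally show ?thesis using prob_space by simp
qed

lemma E2_nonneg: "0 \<le> E2 a b"
  unfolding E2_def by (rule integral_nonneg_AE) (use AE_nonneg in auto)

lemma E2_zero: "a \<notin> IM \<or> b \<notin> IM \<Longrightarrow> E2 a b = 0"
  unfolding E2_def by (rule integral_eq_zero_AE) (use AE_zero in auto)

lemma E2_comm: "E2 a b = E2 b a" unfolding E2_def by (simp add: mult.commute)

lemma E2_sum: "(\<Sum>b\<in>IM. E2 a b) = p a"
proof -
  have "(\<Sum>b\<in>IM. E2 a b) = (\<integral>u. (\<Sum>b\<in>IM. u a * u b) \<partial>\<mu>)"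
    unfolding E2_def by (rule Bochner_Integration.integral_sum[symmetric]) (rule int_eval2)
  also have "\<dots> = (\<integral>u. u a \<partial>\<mu>)"
    by (rule integral_cong_AE) (use AE_sum in \<open>auto simp: sum_distrib_left[symmetric]\<close>)
  finally show ?thesis by (simp add: pker_def)
qed

end


lemma infsum_nat_complex:
  fixes h :: "nat \<Rightarrow> complex"
  shows "infsum h UNIV = (if summable (\<lambda>n. norm (h n)) then suminf h else 0)"
proof (cases "summable (\<lambda>n. norm (h n))")
  case True
  then have "(h has_sum suminf h) UNIV"
    by (intro norm_summable_imp_has_sum) (auto intro: summable_norm_cancel summable_sums)
  then show ?thesis using True by (simp add: infsumI)
next
  case False
  have "\<not> h summable_on UNIV"
  proof
    assume "h summable_on UNIV"
    then have "(\<lambda>n. norm (h n)) summable_on UNIV"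
      using summable_on_iff_abs_summable_on_complex by blast
    then have "summable (\<lambda>n. norm (h n))"
      by (subst summable_on_UNIV_nonneg_real_iff[symmetric]) auto
    with False show False by simp
  qed
  then show ?thesis using False by (simp add: infsum_not_exists)
qed

lemma summable_ennreal_iff:
  fixes a :: "nat \<Rightarrow> real"
  assumes "\<And>n. 0 \<le> a n"
  shows "summable a \<longleftrightarrow> (\<Sum>n. ennreal (a n)) \<noteq> top"
proof
  assume s: "summable a"
  show "(\<Sum>n. ennreal (a n)) \<noteq> top" using suminf_ennreal2[OF assms s] by simp
next
  assume "(\<Sum>n. ennreal (a n)) \<noteq> top"
  then show "summable a" using summable_iff_suminf_neq_top[of a] assms by blast
qed

lemma meas_infsum_int:
  fixes f :: "'a \<Rightarrow> int \<Rightarrow> complex"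
  assumes [measurable]: "\<And>x. (\<lambda>u. f u x) \<in> borel_measurable N"
  shows "(\<lambda>u. infsum (f u) UNIV) \<in> borel_measurable N"
proof -
  have bij: "bij_betw int_decode UNIV UNIV" using bij_int_decode by (simp add: bij_def)
  have eq: "infsum (f u) UNIV = (if (\<Sum>n. ennreal (norm (f u (int_decode n)))) \<noteq> top
              then (\<Sum>n. f u (int_decode n)) else 0)" for u
  proof -
    have "infsum (f u) UNIV = infsum (\<lambda>n. f u (int_decode n)) UNIV"
      using infsum_reindex_bij_betw[OF bij, of "f u"] by simp
    also have "\<dots> = (if summable (\<lambda>n. norm (f u (int_decode n))) then (\<Sum>n. f u (int_decode n)) else 0)"
      by (rule infsum_nat_complex)
    also have "\<dots> = (if (\<Sum>n. ennreal (norm (f u (int_decode n)))) \<noteq> top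
              then (\<Sum>n. f u (int_decode n)) else 0)"
      by (subst summable_ennreal_iff) auto
    finally show ?thesis .
  qed
  show ?thesis unfolding eq by measurable
qed

context envL
begin

lemma meas_lam_integrand:
  "(\<lambda>u. (cmod (\<Sum>\<^sub>\<infinity>x\<in>(UNIV::int set). complex_of_real (u x) * cis (t * of_int x)))\<^sup>2) \<in> borel_measurable \<mu>"
proof -
  have "(\<lambda>u. (\<Sum>\<^sub>\<infinity>x\<in>(UNIV::int set). complex_of_real (u x) * cis (t * of_int x))) \<in> borel_measurable \<mu>"
    by (rule meas_infsum_int) measurable
  then show ?thesis by measurable
qed

definition r :: "int \<Rightarrow> real" where "r y = qker \<mu> 0 y"
definition qb :: "int \<Rightarrow> real" where "qb y = (\<Sum>\<^sub>\<infinity>z\<in>(UNIV::int set). p z * p (z + y))"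
definition d :: "int \<Rightarrow> real" where "d y = r y - qb y"

lemma r_inf: "r y = (\<Sum>\<^sub>\<infinity>z\<in>(UNIV::int set). E2 z (z + y))"
  unfolding r_def qker_def E2_def by simp

lemma IM_iff: "z \<in> IM \<longleftrightarrow> \<bar>z\<bar> \<le> int M" by (auto simp: IM_def)
lemma IM2_iff: "z \<in> IM2 \<longleftrightarrow> \<bar>z\<bar> \<le> 2 * int M" by (auto simp: IM2_def)

lemma r_eq: "r y = (\<Sum>z\<in>IM. E2 z (z + y))"
  unfolding r_inf by (rule infsum_fin_supp) (auto intro: E2_zero)

lemma qb_eq: "qb y = (\<Sum>z\<in>IM. p z * p (z + y))"
  unfolding qb_def by (rule infsum_fin_supp) (auto simp: p_zero)

lemma r_nonneg: "0 \<le> r y" unfolding r_eq by (intro sum_nonneg E2_nonneg)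
lemma qb_nonneg: "0 \<le> qb y" unfolding qb_eq by (intro sum_nonneg mult_nonneg_nonneg p_nonneg)

lemma r_zero: "y \<notin> IM2 \<Longrightarrow> r y = 0"
  unfolding r_eq by (intro sum.neutral ballI E2_zero) (auto simp: IM_iff IM2_iff)
lemma qb_zero: "y \<notin> IM2 \<Longrightarrow> qb y = 0"
  unfolding qb_eq by (intro sum.neutral ballI) (auto simp: IM_iff IM2_iff intro!: p_zero)
lemma d_zero: "y \<notin> IM2 \<Longrightarrow> d y = 0"
  by (simp add: d_def r_zero qb_zero)

lemma shiftIM: "z \<in> IM \<Longrightarrow> (\<Sum>y\<in>IM2. f (z + y)) = sum f IM" if "\<And>b. b \<notin> IM \<Longrightarrow> f b = 0" for f :: "int \<Rightarrow> real"
  by (rule sum_shift_supp) (use that in \<open>auto simp: IM_iff IM2_iff\<close>)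

lemma r_sum: "sum r IM2 = 1"
proof -
  have "sum r IM2 = (\<Sum>z\<in>IM. \<Sum>y\<in>IM2. E2 z (z + y))"
    unfolding r_eq by (rule sum.swap)
  also have "\<dots> = (\<Sum>z\<in>IM. \<Sum>b\<in>IM. E2 z b)"
    by (intro sum.cong refl shiftIM) (auto intro: E2_zero)
  also have "\<dots> = 1" by (simp add: E2_sum p_sum)
  finally show ?thesis .
qed

lemma qb_sum: "sum qb IM2 = 1"
proof -
  have "sum qb IM2 = (\<Sum>z\<in>IM. p z * (\<Sum>y\<in>IM2. p (z + y)))"
    unfolding qb_eq sum_distrib_left by (rule sum.swap)
  also have "\<dots> = (\<Sum>z\<in>IM. p z * (\<Sum>b\<in>IM. p b))"
    by (intro sum.cong refl arg_cong2[where f="(*)"] shiftIM) (auto intro: p_zero)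
  also have "\<dots> = 1" by (simp add: p_sum flip: sum_distrib_right)
  finally show ?thesis .
qed

lemma d_sum: "sum d IM2 = 0"
  by (simp add: d_def sum_subtractf r_sum qb_sum)

lemma bij_shift: "bij_betw (\<lambda>w::int. w + y) UNIV UNIV"
  by (rule bij_betwI[where g="\<lambda>w. w - y"]) auto

lemma r_sym: "r (- y) = r y"
proof -
  have "r (- y) = (\<Sum>\<^sub>\<infinity>w\<in>(UNIV::int set). E2 (w + y) (w + y + - y))"
    unfolding r_inf by (rule infsum_reindex_bij_betw[OF bij_shift, symmetric])
  also have "\<dots> = r y" unfolding r_inf by (simp add: E2_comm)
  finally show ?thesis .
qed

lemma qb_sym: "qb (- y) = qb y"
proof -
  have "qb (- y) = (\<Sum>\<^sub>\<infinity>w\<in>(UNIV::int set). p (w + y) * p (w + y + - y))"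
    unfolding qb_def by (rule infsum_reindex_bij_betw[OF bij_shift, symmetric])
  also have "\<dots> = qb y" unfolding qb_def by (simp add: mult.commute)
  finally show ?thesis .
qed

lemma d_sym: "d (- y) = d y" by (simp add: d_def r_sym qb_sym)

lemma qker_eq: "qker \<mu> w y = qb (y - w) + (if w = 0 then d y else 0)"
proof (cases "w = 0")
  case True
  then show ?thesis by (simp add: d_def r_def)
next
  case False
  then show ?thesis unfolding qker_def qb_def by (simp add: algebra_simps)
qed

lemma qker_zero: "\<bar>y - w\<bar> > 2 * int M \<Longrightarrow> qker \<mu> w y = 0"
  by (auto simp: qker_eq qb_zero d_zero IM2_iff)

lemma qker_nonneg: "0 \<le> qker \<mu> w y"
  by (cases "w = 0") (auto simp: qker_eq d_def r_nonneg qb_nonneg)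

lemma cmod_sq_sum:
  fixes v :: "int \<Rightarrow> real" and A :: "int set"
  assumes "finite A"
  shows "(cmod (\<Sum>x\<in>A. complex_of_real (v x) * cis (t * of_int x)))\<^sup>2
        = (\<Sum>x\<in>A. \<Sum>w\<in>A. v x * v w * cos (t * of_int (x - w)))"
proof -
  let ?Z = "\<Sum>x\<in>A. complex_of_real (v x) * cis (t * of_int x)"
  have re: "Re ?Z = (\<Sum>x\<in>A. v x * cos (t * of_int x))" by (simp add: Re_sum)
  have im: "Im ?Z = (\<Sum>x\<in>A. v x * sin (t * of_int x))" by (simp add: Im_sum)
  have "(cmod ?Z)\<^sup>2 = (\<Sum>x\<in>A. \<Sum>w\<in>A. v x * cos (t * of_int x) * (v w * cos (t * of_int w))
        + v x * sin (t * of_int x) * (v w * sin (t * of_int w)))"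
    unfolding cmod_power2 re im by (simp add: power2_eq_square sum_product sum.distrib)
  also have "\<dots> = (\<Sum>x\<in>A. \<Sum>w\<in>A. v x * v w * cos (t * of_int (x - w)))"
    by (intro sum.cong refl) (simp add: cos_diff algebra_simps)
  finally show ?thesis .
qed

lemma lam_bar_eq: "lam_bar \<mu> t = (\<Sum>y\<in>IM2. qb y * cos (t * of_int y))"
proof -
  have "lam_bar \<mu> t = (\<Sum>x\<in>IM. \<Sum>w\<in>IM. p x * p w * cos (t * of_int (x - w)))"
    unfolding lam_bar_def
    by (subst infsum_fin_supp[where S=IM]) (auto simp: p_zero cmod_sq_sum)
  also have "\<dots> = (\<Sum>w\<in>IM. \<Sum>x\<in>IM. p w * (p x * cos (t * of_int (x - w))))"
    by (subst sum.swap) (simp add: algebra_simps)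
  also have "\<dots> = (\<Sum>w\<in>IM. p w * (\<Sum>y\<in>IM2. p (w + y) * cos (t * of_int (w + y - w))))"
  proof (intro sum.cong refl)
    fix w assume w: "w \<in> IM"
    have "(\<Sum>x\<in>IM. p x * cos (t * of_int (x - w))) = (\<Sum>y\<in>IM2. p (w + y) * cos (t * of_int (w + y - w)))"
      by (rule shiftIM[where z=w and f="\<lambda>b. p b * cos (t * of_int (b - w))", symmetric]) (use w p_zero in auto)
    then show "(\<Sum>x\<in>IM. p w * (p x * cos (t * of_int (x - w)))) =
      p w * (\<Sum>y\<in>IM2. p (w + y) * cos (t * of_int (w + y - w)))"
      unfolding sum_distrib_left[symmetric] by simp
  qed
  also have "\<dots> = (\<Sum>y\<in>IM2. qb y * cos (t * of_int y))"
    unfolding qb_eq by (simp add: sum_distrib_left sum_distrib_right algebra_simps sum.swap[of _ IM])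
  finally show ?thesis .
qed

lemma lam_eq: "lam \<mu> t = (\<Sum>y\<in>IM2. r y * cos (t * of_int y))"
proof -
  have "lam \<mu> t = (\<integral>u. (\<Sum>x\<in>IM. \<Sum>w\<in>IM. u x * u w * cos (t * of_int (x - w))) \<partial>\<mu>)"
    unfolding lam_def
  proof (rule integral_cong_AE)
    show "AE u in \<mu>. (cmod (\<Sum>\<^sub>\<infinity>x\<in>(UNIV::int set). complex_of_real (u x) * cis (t * of_int x)))\<^sup>2 =
      (\<Sum>x\<in>IM. \<Sum>w\<in>IM. u x * u w * cos (t * of_int (x - w)))"
      using AE_zero
    proof eventually_elim
      case (elim u)
      then show ?case by (subst infsum_fin_supp[where S=IM]) (auto simp: cmod_sq_sum)
    qed
  qed (use meas_lam_integrand in auto)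
  also have "\<dots> = (\<Sum>x\<in>IM. \<Sum>w\<in>IM. E2 x w * cos (t * of_int (x - w)))"
    unfolding E2_def
    by (simp add: Bochner_Integration.integral_sum int_eval2 integrable_sum)
  also have "\<dots> = (\<Sum>w\<in>IM. \<Sum>x\<in>IM. E2 x w * cos (t * of_int (x - w)))"
    by (rule sum.swap)
  also have "\<dots> = (\<Sum>w\<in>IM. \<Sum>y\<in>IM2. E2 w (w + y) * cos (t * of_int (w + y - w)))"
  proof (rule sum.cong[OF refl])
    fix w assume w: "w \<in> IM"
    have "(\<Sum>x\<in>IM. E2 x w * cos (t * of_int (x - w))) = (\<Sum>y\<in>IM2. E2 (w + y) w * cos (t * of_int (w + y - w)))"
      by (rule shiftIM[where z=w and f="\<lambda>b. E2 b w * cos (t * of_int (b - w))", symmetric]) (use w E2_zero in auto)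
    then show "(\<Sum>x\<in>IM. E2 x w * cos (t * of_int (x - w))) = (\<Sum>y\<in>IM2. E2 w (w + y) * cos (t * of_int (w + y - w)))"
      by (simp add: E2_comm)
  qed
  also have "\<dots> = (\<Sum>y\<in>IM2. r y * cos (t * of_int y))"
    unfolding r_eq by (simp add: sum_distrib_right sum.swap[of _ IM])
  finally show ?thesis .
qed

end


lemma int_cos: "integral {-pi..pi} (\<lambda>t. cos (t * of_int n)) = (if n = 0 then 2 * pi else 0)"
proof (cases "n = 0")
  case True then show ?thesis by simp
next
  case False
  have "((\<lambda>t. cos (t * of_int n)) has_integral
      (sin (pi * of_int n) / of_int n - sin (- pi * of_int n) / of_int n)) {-pi..pi}"
  proof (rule fundamental_theorem_of_calculus)
    fix x :: real
    show "((\<lambda>t. sin (t * of_int n) / of_int n) has_vector_derivative cos (x * of_int n)) (at x within {-pi..pi})"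
      unfolding has_real_derivative_iff_has_vector_derivative[symmetric]
      using False by (auto intro!: derivative_eq_intros)
  qed simp
  then show ?thesis using False
    by (simp add: integral_unique del: mult_minus_left)
qed

lemma int_sin: "integral {-pi..pi} (\<lambda>t. sin (t * of_int n)) = 0"
proof (cases "n = 0")
  case True then show ?thesis by simp
next
  case False
  have "((\<lambda>t. sin (t * of_int n)) has_integral
      ((- cos (pi * of_int n) / of_int n) - (- cos (- pi * of_int n) / of_int n))) {-pi..pi}"
  proof (rule fundamental_theorem_of_calculus)
    fix x :: real
    show "((\<lambda>t. - cos (t * of_int n) / of_int n) has_vector_derivative sin (x * of_int n)) (at x within {-pi..pi})"
      unfolding has_real_derivative_iff_has_vector_derivative[symmetric]
      using False by (auto intro!: derivative_eq_intros)
  qed simp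
  then show ?thesis using False by (simp add: integral_unique)
qed


context envL
begin

abbreviation lb where "lb \<equiv> lam_bar \<mu>"
abbreviation la where "la \<equiv> lam \<mu>"

lemma lb_fun: "lb = (\<lambda>t. \<Sum>y\<in>IM2. qb y * cos (t * of_int y))"
  using lam_bar_eq by auto
lemma la_fun: "la = (\<lambda>t. \<Sum>y\<in>IM2. r y * cos (t * of_int y))"
  using lam_eq by auto

lemma cont_lb[continuous_intros]: "continuous_on A lb"
  unfolding lb_fun by (intro continuous_intros)
lemma cont_la[continuous_intros]: "continuous_on A la"
  unfolding la_fun by (intro continuous_intros)

lemma lb_nonneg: "0 \<le> lb t" unfolding lam_bar_def by simp

lemma lb_le1: "lb t \<le> 1"
proof -
  have "lb t \<le> (\<Sum>y\<in>IM2. qb y * 1)"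
    unfolding lam_bar_eq by (intro sum_mono mult_left_mono) (auto simp: qb_nonneg)
  then show ?thesis by (simp add: qb_sum)
qed

lemma la_le1: "la t \<le> 1"
proof -
  have "la t \<le> (\<Sum>y\<in>IM2. r y * 1)"
    unfolding lam_eq by (intro sum_mono mult_left_mono) (auto simp: r_nonneg)
  then show ?thesis by (simp add: r_sum)
qed

lemma lb_0: "lb 0 = 1" unfolding lam_bar_eq by (simp add: qb_sum)
lemma la_0: "la 0 = 1" unfolding lam_eq by (simp add: r_sum)

lemma sin_sym_sum:
  fixes f :: "int \<Rightarrow> real"
  assumes "\<And>y. f (- y) = f y"
  shows "(\<Sum>y\<in>IM2. f y * sin (t * of_int y)) = 0"
proof -
  have "(\<Sum>y\<in>IM2. f y * sin (t * of_int y)) = (\<Sum>y\<in>IM2. f (- y) * sin (t * of_int (- y)))"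
    by (rule sum.reindex_bij_witness[where i=uminus and j=uminus]) (auto simp: IM2_iff)
  also have "\<dots> = - (\<Sum>y\<in>IM2. f y * sin (t * of_int y))"
    by (simp add: assms sum_negf)
  finally show ?thesis by simp
qed

definition Wz :: "int \<Rightarrow> int set" where "Wz z = {z - 2 * int M..z + 2 * int M}"
lemma fin_Wz[simp]: "finite (Wz z)" by (simp add: Wz_def)

lemma conv_cos: "(\<Sum>w\<in>Wz z. qb (z - w) * cos (t * of_int (w - y))) = lb t * cos (t * of_int (z - y))"
proof -
  have "(\<Sum>w\<in>Wz z. qb (z - w) * cos (t * of_int (w - y))) =
        (\<Sum>v\<in>IM2. qb v * cos (t * of_int (z - v - y)))"
    by (rule sum.reindex_bij_witness[where i="\<lambda>v. z - v" and j="\<lambda>w. z - w"])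
       (auto simp: Wz_def IM2_iff)
  also have "\<dots> = (\<Sum>v\<in>IM2. qb v * cos (t * of_int v) * cos (t * of_int (z - y))
      + qb v * sin (t * of_int v) * sin (t * of_int (z - y)))"
  proof (rule sum.cong[OF refl])
    fix v
    have "t * of_int (z - v - y) = t * of_int (z - y) - t * of_int v" by (simp add: algebra_simps)
    then show "qb v * cos (t * of_int (z - v - y)) = qb v * cos (t * of_int v) * cos (t * of_int (z - y))
      + qb v * sin (t * of_int v) * sin (t * of_int (z - y))"
      by (simp only: cos_diff) (simp add: algebra_simps)
  qed
  also have "\<dots> = (\<Sum>v\<in>IM2. qb v * cos (t * of_int v)) * cos (t * of_int (z - y))
      + (\<Sum>v\<in>IM2. qb v * sin (t * of_int v)) * sin (t * of_int (z - y))"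
    by (simp add: sum_distrib_right sum.distrib)
  also have "\<dots> = lb t * cos (t * of_int (z - y))"
    by (simp add: lam_bar_eq sin_sym_sum qb_sym)
  finally show ?thesis .
qed

definition Qb :: "nat \<Rightarrow> int \<Rightarrow> int \<Rightarrow> real" where
  "Qb k x z = 1 / (2 * pi) * integral {-pi..pi} (\<lambda>t. lb t ^ k * cos (t * of_int (z - x)))"

lemma Qb_0: "Qb 0 x z = (if x = z then 1 else 0)"
  unfolding Qb_def using int_cos[of "z - x"] by auto

lemma Qb_conv: "(\<Sum>w\<in>Wz z. Qb m y w * qb (z - w)) = Qb (Suc m) y z"
proof -
  have "(\<Sum>w\<in>Wz z. Qb m y w * qb (z - w)) =
     1 / (2 * pi) * (\<Sum>w\<in>Wz z. integral {-pi..pi} (\<lambda>t. qb (z - w) * (lb t ^ m * cos (t * of_int (w - y)))))"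
    unfolding Qb_def integral_mult_right sum_distrib_left by (simp only: mult_ac)
  also have "\<dots> = 1 / (2 * pi) * integral {-pi..pi} (\<lambda>t. \<Sum>w\<in>Wz z. qb (z - w) * (lb t ^ m * cos (t * of_int (w - y))))"
    by (subst integral_sum) (auto intro!: integrable_continuous_interval continuous_intros)
  also have "\<dots> = Qb (Suc m) y z"
    unfolding Qb_def
  proof (intro arg_cong2[where f="(*)"] refl integral_cong)
    fix t
    have "(\<Sum>w\<in>Wz z. qb (z - w) * (lb t ^ m * cos (t * of_int (w - y)))) =
      lb t ^ m * (\<Sum>w\<in>Wz z. qb (z - w) * cos (t * of_int (w - y)))"
      by (simp add: sum_distrib_left algebra_simps)
    also have "\<dots> = lb t ^ Suc m * cos (t * of_int (z - y))"
      by (subst conv_cos) simp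
    finally show "(\<Sum>w\<in>Wz z. qb (z - w) * (lb t ^ m * cos (t * of_int (w - y)))) = lb t ^ Suc m * cos (t * of_int (z - y))" .
  qed
  finally show ?thesis .
qed

definition H :: "nat \<Rightarrow> int \<Rightarrow> real" where "H m z = (\<Sum>y\<in>IM2. d y * Qb m y z)"

lemma H_0: "H 0 z = d z"
proof (cases "z \<in> IM2")
  case True
  then show ?thesis unfolding H_def Qb_0 by (simp add: if_distrib cong: if_cong)
next
  case False
  then show ?thesis unfolding H_def Qb_0 by (auto simp: d_zero intro!: sum.neutral)
qed

lemma H_conv: "(\<Sum>w\<in>Wz z. H m w * qb (z - w)) = H (Suc m) z"
proof -
  have "(\<Sum>w\<in>Wz z. H m w * qb (z - w)) = (\<Sum>y\<in>IM2. d y * (\<Sum>w\<in>Wz z. Qb m y w * qb (z - w)))"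
    unfolding H_def by (simp add: sum_distrib_left sum_distrib_right sum.swap[of _ "Wz z"] algebra_simps)
  also have "\<dots> = H (Suc m) z" unfolding H_def Qb_conv ..
  finally show ?thesis .
qed

abbreviation qp where "qp \<equiv> qpow \<mu>"

lemma qpow_rec: "qp (Suc k) x z = (\<Sum>w\<in>Wz z. qp k x w * qker \<mu> w z)"
  by (simp, rule infsum_fin_supp) (auto simp: Wz_def qker_zero)

lemma qpow_ident: "qp k x z = Qb k x z + (\<Sum>j<k. qp j x 0 * H (k - 1 - j) z)"
proof (induction k arbitrary: z)
  case 0
  then show ?case by (simp add: Qb_0)
next
  case (Suc k)
  have "qp (Suc k) x z = (\<Sum>w\<in>Wz z. qp k x w * qb (z - w)) + (\<Sum>w\<in>Wz z. if w = 0 then qp k x 0 * d z else 0)"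
    unfolding qpow_rec qker_eq distrib_left sum.distrib by (intro arg_cong2[where f="(+)"] refl sum.cong) auto
  also have "(\<Sum>w\<in>Wz z. if w = 0 then qp k x 0 * d z else 0) = qp k x 0 * d z"
  proof (cases "0 \<in> Wz z")
    case True then show ?thesis by (simp add: sum.delta)
  next
    case False
    then have "z \<notin> IM2" by (auto simp: Wz_def IM2_iff)
    then show ?thesis using False by (simp add: sum.delta d_zero)
  qed
  also have "(\<Sum>w\<in>Wz z. qp k x w * qb (z - w)) =
      (\<Sum>w\<in>Wz z. Qb k x w * qb (z - w)) + (\<Sum>j<k. qp j x 0 * (\<Sum>w\<in>Wz z. H (k - 1 - j) w * qb (z - w)))"
    unfolding Suc.IH by (simp add: algebra_simps sum.distrib sum_distrib_left sum_distrib_right sum.swap[of _ "Wz z"])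
  also have "\<dots> = Qb (Suc k) x z + (\<Sum>j<k. qp j x 0 * H (Suc k - 1 - j) z)"
    unfolding Qb_conv H_conv by (intro arg_cong2[where f="(+)"] refl sum.cong) (auto simp: Suc_diff_Suc)
  finally show ?case by (simp add: H_0 algebra_simps)
qed

end


lemma double_sum_swap:
  fixes g h :: "nat \<Rightarrow> real"
  shows "(\<Sum>k\<le>n. \<Sum>j<k. g j * h (k - 1 - j)) = (\<Sum>j<n. g j * (\<Sum>i\<le>n - 1 - j. h i))"
proof (induction n)
  case 0 then show ?case by simp
next
  case (Suc n)
  have "(\<Sum>k\<le>Suc n. \<Sum>j<k. g j * h (k - 1 - j)) = (\<Sum>j<n. g j * (\<Sum>i\<le>n - 1 - j. h i)) + (\<Sum>j<Suc n. g j * h (n - j))"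
    using Suc by simp
  also have "\<dots> = (\<Sum>j<n. g j * ((\<Sum>i\<le>n - 1 - j. h i) + h (n - j))) + g n * h 0"
    by (simp add: sum.distrib algebra_simps)
  also have "\<dots> = (\<Sum>j<n. g j * (\<Sum>i\<le>Suc n - 1 - j. h i)) + g n * (\<Sum>i\<le>Suc n - 1 - n. h i)"
  proof -
    have "(\<Sum>i\<le>n - 1 - j. h i) + h (n - j) = (\<Sum>i\<le>Suc n - 1 - j. h i)" if "j < n" for j
    proof -
      have "Suc n - 1 - j = Suc (n - 1 - j)" using that by simp
      moreover have "n - j = Suc (n - 1 - j)" using that by simp
      ultimately show ?thesis by simp
    qed
    then show ?thesis by simp
  qed
  also have "\<dots> = (\<Sum>j<Suc n. g j * (\<Sum>i\<le>Suc n - 1 - j. h i))" by simp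
  finally show ?case .
qed

context envL
begin

definition Rk :: "nat \<Rightarrow> int \<Rightarrow> int set" where "Rk k x = {x - 2 * int M * int k..x + 2 * int M * int k}"

lemma qpow_nonneg: "0 \<le> qp k x z"
proof (induction k arbitrary: z)
  case 0 then show ?case by simp
next
  case (Suc k) then show ?case
    unfolding qpow_rec by (intro sum_nonneg mult_nonneg_nonneg qker_nonneg) auto
qed

lemma qpow_supp: "z \<notin> Rk k x \<Longrightarrow> qp k x z = 0"
proof (induction k arbitrary: z)
  case 0 then show ?case by (simp add: Rk_def)
next
  case (Suc k)
  show ?case unfolding qpow_rec
  proof (intro sum.neutral ballI)
    fix w assume w: "w \<in> Wz z"
    have "w \<notin> Rk k x" using w Suc.prems by (auto simp: Rk_def Wz_def algebra_simps)
    then show "qp k x w * qker \<mu> w z = 0" using Suc.IH by simp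
  qed
qed

lemma kernel_rowsum: "(\<Sum>z\<in>Wz w. qker \<mu> w z) = 1"
proof -
  have "(\<Sum>z\<in>Wz w. qb (z - w)) = (\<Sum>v\<in>IM2. qb v)"
    by (rule sum.reindex_bij_witness[where i="\<lambda>v. v + w" and j="\<lambda>z. z - w"]) (auto simp: Wz_def IM2_iff)
  moreover have "(\<Sum>z\<in>Wz w. (if w = 0 then d z else 0)) = 0"
  proof (cases "w = 0")
    case True
    then have "Wz w = IM2" by (auto simp: Wz_def IM2_def)
    then show ?thesis using True d_sum by simp
  qed simp
  ultimately show ?thesis unfolding qker_eq sum.distrib by (simp add: qb_sum)
qed

lemma qpow_rowsum: "(\<Sum>z\<in>Rk k x. qp k x z) = 1"
proof (induction k)
  case 0 then show ?case by (simp add: Rk_def)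
next
  case (Suc k)
  have "(\<Sum>z\<in>Rk (Suc k) x. qp (Suc k) x z) = (\<Sum>z\<in>Rk (Suc k) x. \<Sum>w\<in>Rk k x. qp k x w * qker \<mu> w z)"
  proof (rule sum.cong[OF refl])
    fix z
    show "qp (Suc k) x z = (\<Sum>w\<in>Rk k x. qp k x w * qker \<mu> w z)"
      unfolding qpow_rec
    proof (rule sum_supp_eq)
      fix w assume "w \<notin> Wz z \<inter> Rk k x"
      then show "qp k x w * qker \<mu> w z = 0"
        using qpow_supp[of w k x] qker_zero[of z w] by (auto simp: Wz_def)
    qed (auto simp: Rk_def)
  qed
  also have "\<dots> = (\<Sum>w\<in>Rk k x. qp k x w * (\<Sum>z\<in>Rk (Suc k) x. qker \<mu> w z))"
    by (subst sum.swap) (simp add: sum_distrib_left)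
  also have "\<dots> = (\<Sum>w\<in>Rk k x. qp k x w)"
  proof (rule sum.cong[OF refl])
    fix w assume w: "w \<in> Rk k x"
    have "(\<Sum>z\<in>Rk (Suc k) x. qker \<mu> w z) = (\<Sum>z\<in>Wz w. qker \<mu> w z)"
    proof (rule sum_supp_eq)
      fix z assume "z \<notin> Rk (Suc k) x \<inter> Wz w"
      then show "qker \<mu> w z = 0"
        using w qker_zero[of z w] by (auto simp: Wz_def Rk_def algebra_simps)
    qed (auto simp: Rk_def)
    then show "qp k x w * (\<Sum>z\<in>Rk (Suc k) x. qker \<mu> w z) = qp k x w"
      by (simp add: kernel_rowsum)
  qed
  finally show ?case using Suc.IH by simp
qed

lemma qpow_le1: "qp k x z \<le> 1"
proof (cases "z \<in> Rk k x")
  case True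
  have "qp k x z \<le> (\<Sum>z\<in>Rk k x. qp k x z)"
    using True by (intro member_le_sum qpow_nonneg) (auto simp: Rk_def)
  then show ?thesis using qpow_rowsum by simp
qed (simp add: qpow_supp)

definition Sm :: "nat \<Rightarrow> real" where "Sm m = (\<Sum>i\<le>m. H i 0)"

lemma Gn_decomp: "Gn \<mu> n x 0 = (\<Sum>k\<le>n. Qb k x 0) + (\<Sum>j<n. qp j x 0 * Sm (n - 1 - j))"
  unfolding Gn_def Sm_def
  using double_sum_swap[of "\<lambda>j. qp j x 0" "\<lambda>i. H i 0" n]
  by (subst qpow_ident) (simp add: sum.distrib)

lemma sum_d_cos: "(\<Sum>y\<in>IM2. d y * cos (t * of_int (0 - y))) = la t - lb t"
  by (simp add: d_def lam_eq lam_bar_eq left_diff_distrib sum_subtractf)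

lemma H_int: "H i 0 = 1 / (2 * pi) * integral {-pi..pi} (\<lambda>t. lb t ^ i * (la t - lb t))"
proof -
  have "H i 0 = 1 / (2 * pi) * (\<Sum>y\<in>IM2. integral {-pi..pi} (\<lambda>t. d y * (lb t ^ i * cos (t * of_int (0 - y)))))"
    unfolding H_def Qb_def by (simp add: sum_distrib_left algebra_simps)
  also have "\<dots> = 1 / (2 * pi) * integral {-pi..pi} (\<lambda>t. \<Sum>y\<in>IM2. d y * (lb t ^ i * cos (t * of_int (0 - y))))"
    by (subst integral_sum) (auto intro!: integrable_continuous_interval continuous_intros)
  also have "\<dots> = 1 / (2 * pi) * integral {-pi..pi} (\<lambda>t. lb t ^ i * (la t - lb t))"
  proof -
    have "(\<Sum>y\<in>IM2. d y * (lb t ^ i * cos (t * of_int (0 - y)))) = lb t ^ i * (la t - lb t)" for t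
    proof -
      have "(\<Sum>y\<in>IM2. d y * (lb t ^ i * cos (t * of_int (0 - y)))) = lb t ^ i * (\<Sum>y\<in>IM2. d y * cos (t * of_int (0 - y)))"
        by (simp add: sum_distrib_left algebra_simps)
      then show ?thesis by (simp only: sum_d_cos)
    qed
    then show ?thesis by simp
  qed
  finally show ?thesis .
qed

lemma Sm_int: "Sm m = 1 / (2 * pi) * integral {-pi..pi} (\<lambda>t. (la t - lb t) * (\<Sum>i\<le>m. lb t ^ i))"
proof -
  have "Sm m = 1 / (2 * pi) * (\<Sum>i\<le>m. integral {-pi..pi} (\<lambda>t. lb t ^ i * (la t - lb t)))"
    unfolding Sm_def H_int by (simp add: sum_distrib_left)
  also have "\<dots> = 1 / (2 * pi) * integral {-pi..pi} (\<lambda>t. \<Sum>i\<le>m. lb t ^ i * (la t - lb t))"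
    by (subst integral_sum) (auto intro!: integrable_continuous_interval continuous_intros)
  finally show ?thesis by (simp add: sum_distrib_left sum_distrib_right mult.commute)
qed

lemma Gbar_int: "(\<Sum>k\<le>n. Qb k x 0) = 1 / (2 * pi) * integral {-pi..pi} (\<lambda>t. (\<Sum>k\<le>n. lb t ^ k) * cos (t * of_int x))"
proof -
  have "(\<Sum>k\<le>n. Qb k x 0) = 1 / (2 * pi) * integral {-pi..pi} (\<lambda>t. \<Sum>k\<le>n. lb t ^ k * cos (t * of_int (0 - x)))"
    unfolding Qb_def
    by (subst integral_sum) (auto simp: sum_distrib_left intro!: integrable_continuous_interval continuous_intros)
  then show ?thesis by (simp add: sum_distrib_right)
qed

end


lemma sinc_lim: "((\<lambda>h::real. sin h / h) \<longlongrightarrow> 1) (at 0)"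
  using DERIV_sin[of 0] unfolding has_field_derivative_iff by simp

lemma one_minus_cos_lim: "((\<lambda>t. (1 - cos (t * y)) / t\<^sup>2) \<longlongrightarrow> y\<^sup>2 / 2) (at (0::real))"
proof (cases "y = 0")
  case True then show ?thesis by simp
next
  case False
  have lim1: "((\<lambda>t. t * y / 2) \<longlongrightarrow> 0) (at (0::real))" by (auto intro!: tendsto_eq_intros)
  have ev: "eventually (\<lambda>t. t * y / 2 \<noteq> 0) (at (0::real))"
    using False by (auto simp: eventually_at_filter)
  have "filterlim (\<lambda>t. t * y / 2) (at 0) (at (0::real))" by (rule filterlim_atI[OF lim1 ev])
  from filterlim_compose[OF sinc_lim this]
  have "((\<lambda>t. sin (t * y / 2) / (t * y / 2)) \<longlongrightarrow> 1) (at 0)" .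
  then have "((\<lambda>t. y\<^sup>2 / 2 * (sin (t * y / 2) / (t * y / 2))\<^sup>2) \<longlongrightarrow> y\<^sup>2 / 2 * 1\<^sup>2) (at 0)"
    by (intro tendsto_intros)
  moreover have "eventually (\<lambda>t. y\<^sup>2 / 2 * (sin (t * y / 2) / (t * y / 2))\<^sup>2 = (1 - cos (t * y)) / t\<^sup>2) (at (0::real))"
    unfolding eventually_at_filter
  proof (rule always_eventually, intro allI impI)
    fix t :: real assume t: "t \<noteq> 0"
    have "cos (t * y) = cos (2 * (t * y / 2))" by simp
    also have "\<dots> = 1 - 2 * sin (t * y / 2) ^ 2" by (rule cos_double_sin)
    finally show "y\<^sup>2 / 2 * (sin (t * y / 2) / (t * y / 2))\<^sup>2 = (1 - cos (t * y)) / t\<^sup>2"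
      using t False by (simp add: field_simps power2_eq_square)
  qed
  ultimately show ?thesis by (simp add: Lim_transform_eventually)
qed

lemma one_minus_cos_le: "1 - cos u \<le> (u::real)\<^sup>2 / 2"
proof -
  have "cos u = cos (2 * (u / 2))" by simp
  also have "\<dots> = 1 - 2 * sin (u / 2) ^ 2" by (rule cos_double_sin)
  finally have "1 - cos u = 2 * sin (u / 2) ^ 2" by simp
  also have "\<dots> \<le> 2 * (u / 2) ^ 2"
  proof -
    have "\<bar>sin (u / 2)\<bar>\<^sup>2 \<le> \<bar>u / 2\<bar>\<^sup>2" using abs_sin_x_le_abs_x[of "u / 2"] by (intro power_mono) auto
    then show ?thesis by (simp add: power_divide)
  qed
  finally show ?thesis by (simp add: power2_eq_square)
qed

lemma cos_abs_int: "cos (s * of_int \<bar>e\<bar>) = cos (s * of_int e)"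
  by (cases "e \<ge> 0") (auto simp: abs_if)

lemma cos1_int:
  fixes s :: real
  assumes "cos (s * of_int a) = 1" "cos (s * of_int b) = 1"
  shows "cos (s * of_int (a - b * k)) = 1"
proof -
  obtain n1 :: int where n1: "s * of_int a = of_int n1 * 2 * pi" using assms(1) cos_one_2pi_int by blast
  obtain n2 :: int where n2: "s * of_int b = of_int n2 * 2 * pi" using assms(2) cos_one_2pi_int by blast
  have "s * of_int (a - b * k) = s * of_int a - (s * of_int b) * of_int k" by (simp add: algebra_simps)
  also have "\<dots> = of_int (n1 - n2 * k) * 2 * pi" unfolding n1 n2 by (simp add: algebra_simps)
  finally have "s * of_int (a - b * k) = of_int (n1 - n2 * k) * 2 * pi" .
  then show ?thesis using cos_one_2pi_int by blast
qed

context envL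
begin

lemma A1_false:
  assumes "A1 \<mu>" "h > 1" "\<And>w. p w > 0 \<Longrightarrow> h dvd (w - z0)"
  shows False
proof -
  let ?g = "\<lambda>k::int. z0 + k * h"
  have inj: "inj ?g" using assms(2) by (auto simp: inj_def)
  have "(\<Sum>\<^sub>\<infinity>k\<in>(UNIV::int set). p (z0 + k * h)) = infsum p (range ?g)"
    using infsum_reindex[OF inj[unfolded inj_on_def[symmetric]], of p] by (simp add: o_def)
  also have "\<dots> = infsum p UNIV"
  proof (rule infsum_cong_neutral)
    fix w assume wr: "w \<in> UNIV - range ?g"
    then have "\<not> h dvd (w - z0)"
    proof (auto simp: dvd_def)
      fix k assume "w - z0 = h * k"
      then have "w = z0 + k * h" by (simp add: algebra_simps)
      then show False using wr by blast
    qed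
    then show "p w = 0" using assms(3) p_nonneg[of w] by force
  qed auto
  also have "\<dots> = 1" using infsum_fin_supp[of IM p] p_zero p_sum by simp
  finally show False using assms(1,2) unfolding A1_def by blast
qed

lemma exists_supp: "\<exists>z0. p z0 > 0"
proof (rule ccontr)
  assume "\<not> ?thesis"
  then have "\<forall>z. p z = 0" using p_nonneg by (meson not_le order_antisym)
  then show False using p_sum by simp
qed

lemma p_pos_IM: "p z > 0 \<Longrightarrow> z \<in> IM" using p_zero by force

lemma qb_ge: assumes "p z > 0" "p w > 0" shows "qb (w - z) \<ge> p z * p w"
proof -
  have "p z * p (z + (w - z)) \<le> (\<Sum>z'\<in>IM. p z' * p (z' + (w - z)))"
    using p_pos_IM[OF assms(1)] by (intro member_le_sum mult_nonneg_nonneg p_nonneg) auto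
  then show ?thesis unfolding qb_eq by simp
qed

lemma qb_pos: assumes "A1 \<mu>" shows "\<exists>y0>0. qb y0 > 0"
proof -
  obtain z0 where z0: "p z0 > 0" using exists_supp by blast
  show ?thesis
  proof (cases "\<forall>w. p w > 0 \<longrightarrow> w = z0")
    case True
    then have "\<And>w. p w > 0 \<Longrightarrow> (2::int) dvd (w - z0)" by auto
    from A1_false[OF assms _ this] show ?thesis by simp
  next
    case False
    then obtain w where w: "p w > 0" "w \<noteq> z0" by blast
    have "qb (w - z0) > 0" using qb_ge[OF z0 w(1)] mult_pos_pos[OF z0 w(1)] by linarith
    then have "qb \<bar>w - z0\<bar> > 0" using qb_sym[of "w - z0"] by (cases "w - z0 \<ge> 0") auto
    then show ?thesis using w(2) by (intro exI[of _ "\<bar>w - z0\<bar>"]) auto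
  qed
qed

lemma lb_even: "lb (- t) = lb t" by (simp add: lam_bar_eq)

lemma one_minus_lb: "1 - lb t = (\<Sum>y\<in>IM2. qb y * (1 - cos (t * of_int y)))"
  by (simp add: lam_bar_eq qb_sum right_diff_distrib sum_subtractf)

lemma one_minus_la: "1 - la t = (\<Sum>y\<in>IM2. r y * (1 - cos (t * of_int y)))"
  by (simp add: lam_eq r_sum right_diff_distrib sum_subtractf)

lemma lb_lt1:
  assumes A1: "A1 \<mu>" and t: "t \<in> {-pi..pi}" "t \<noteq> 0"
  shows "lb t < 1"
proof (rule ccontr)
  assume "\<not> lb t < 1"
  then have eq1: "lb t = 1" using lb_le1[of t] by simp
  define s where "s = \<bar>t\<bar>"
  have s: "0 < s" "s \<le> pi" using t by (auto simp: s_def)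
  have "lb s = 1" using eq1 lb_even[of t] by (cases "t \<ge> 0") (auto simp: s_def)
  then have "(\<Sum>y\<in>IM2. qb y * (1 - cos (s * of_int y))) = 0" using one_minus_lb[of s] by simp
  then have all0: "\<forall>y\<in>IM2. qb y * (1 - cos (s * of_int y)) = 0"
    by (subst sum_nonneg_eq_0_iff[symmetric]) (auto intro!: mult_nonneg_nonneg qb_nonneg)
  have Cq: "cos (s * of_int y) = 1" if "qb y > 0" for y
  proof -
    have "y \<in> IM2" using that qb_zero by force
    then show ?thesis using all0 that by auto
  qed
  have Cp: "cos (s * of_int (w - z)) = 1" if "p z > 0" "p w > 0" for z w
    using qb_ge[OF that] mult_pos_pos[OF that] by (intro Cq) linarith
  obtain z0 where z0: "p z0 > 0" using exists_supp by blast
  show False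
  proof (cases "\<forall>w. p w > 0 \<longrightarrow> w = z0")
    case True
    then have "\<And>w. p w > 0 \<Longrightarrow> (2::int) dvd (w - z0)" by auto
    from A1_false[OF A1 _ this] show ?thesis by simp
  next
    case False
    then obtain w1 where w1: "p w1 > 0" "w1 \<noteq> z0" by blast
    define P where "P m \<longleftrightarrow> 0 < m \<and> cos (s * of_int (int m)) = 1" for m :: nat
    have "P (nat \<bar>w1 - z0\<bar>)"
    proof -
      have "cos (s * of_int (w1 - z0)) = 1" using Cp[OF z0 w1(1)] .
      then have "cos (s * of_int \<bar>w1 - z0\<bar>) = 1"
        using cos_abs_int[of s "w1 - z0"] by simp
      then show ?thesis using w1(2) by (auto simp: P_def)
    qed
    define h where "h = (LEAST m. P m)"
    have Ph: "P h" unfolding h_def by (rule LeastI) fact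
    have minh: "\<not> P m" if "m < h" for m using not_less_Least[of m P] that h_def by simp
    have h1: "h \<noteq> 1"
    proof
      assume "h = 1"
      then have "cos s = 1" using Ph by (simp add: P_def)
      then obtain n :: int where n: "s = of_int n * 2 * pi" using cos_one_2pi_int by blast
      have "of_int n * (2 * pi) > 0" using s n by (simp add: mult.assoc)
      then have "of_int n > (0::real)" using pi_gt_zero by (simp add: zero_less_mult_iff)
      then have "n \<ge> 1" by simp
      then have "(1::real) * (2 * pi) \<le> of_int n * (2 * pi)" by (intro mult_right_mono) auto
      then have "s \<ge> 2 * pi" using n by (simp add: mult.assoc)
      then show False using s pi_gt_zero by linarith
    qed
    have hpos: "h > 0" using Ph by (simp add: P_def)
    have hdvd: "int h dvd (w - z0)" if "p w > 0" for w
    proof -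
      define e where "e = w - z0"
      have Ce: "cos (s * of_int e) = 1" using Cp[OF z0 that] by (simp add: e_def)
      have Chh: "cos (s * of_int (int h)) = 1" using Ph by (simp add: P_def)
      have "cos (s * of_int (e - int h * (e div int h))) = 1" by (rule cos1_int[OF Ce Chh])
      then have Cr: "cos (s * of_int (e mod int h)) = 1" by (simp add: minus_div_mult_eq_mod[symmetric] mult.commute)
      have r0: "0 \<le> e mod int h" "e mod int h < int h" using hpos by auto
      have "e mod int h = 0"
      proof (rule ccontr)
        assume "e mod int h \<noteq> 0"
        then have "P (nat (e mod int h))" using Cr r0 by (auto simp: P_def)
        moreover have "nat (e mod int h) < h" using r0 by auto
        ultimately show False using minh by blast
      qed
      then show ?thesis by (simp add: e_def dvd_eq_mod_eq_0)
    qed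
    have "int h > 1" using h1 hpos by simp
    from A1_false[OF A1 this hdvd] show False .
  qed
qed

definition Aq :: real where "Aq = (\<Sum>y\<in>IM2. qb y * (of_int y)\<^sup>2) / 2"

lemma Aq_pos: assumes "A1 \<mu>" shows "Aq > 0"
proof -
  obtain y0 where y0: "y0 > 0" "qb y0 > 0" using qb_pos[OF assms] by blast
  have "y0 \<in> IM2" using y0 qb_zero by force
  then have "qb y0 * (of_int y0)\<^sup>2 \<le> (\<Sum>y\<in>IM2. qb y * (of_int y)\<^sup>2)"
    by (intro member_le_sum mult_nonneg_nonneg qb_nonneg) auto
  moreover have "qb y0 * (of_int y0)\<^sup>2 > 0" using y0 by simp
  ultimately show ?thesis unfolding Aq_def by simp
qed

lemma f0_lim: "((\<lambda>t. (1 - lb t) / t\<^sup>2) \<longlongrightarrow> Aq) (at 0)"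
proof -
  have "((\<lambda>t. \<Sum>y\<in>IM2. qb y * ((1 - cos (t * of_int y)) / t\<^sup>2)) \<longlongrightarrow> (\<Sum>y\<in>IM2. qb y * ((of_int y)\<^sup>2 / 2))) (at 0)"
    by (intro tendsto_sum tendsto_mult_left one_minus_cos_lim)
  moreover have "(\<lambda>t. \<Sum>y\<in>IM2. qb y * ((1 - cos (t * of_int y)) / t\<^sup>2)) = (\<lambda>t. (1 - lb t) / t\<^sup>2)"
    by (simp add: one_minus_lb sum_divide_distrib)
  moreover have "(\<Sum>y\<in>IM2. qb y * ((of_int y)\<^sup>2 / 2)) = Aq"
    by (simp add: Aq_def sum_divide_distrib)
  ultimately show ?thesis by simp
qed

lemma lb_upper: "1 - lb t \<le> Aq * t\<^sup>2"
proof -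
  have "1 - lb t \<le> (\<Sum>y\<in>IM2. qb y * ((t * of_int y)\<^sup>2 / 2))"
    unfolding one_minus_lb by (intro sum_mono mult_left_mono one_minus_cos_le qb_nonneg)
  also have "\<dots> = (\<Sum>y\<in>IM2. (qb y * (of_int y)\<^sup>2) * (t\<^sup>2 / 2))"
    by (intro sum.cong refl) (simp add: power_mult_distrib)
  also have "\<dots> = Aq * t\<^sup>2" unfolding sum_distrib_right[symmetric] Aq_def by simp
  finally show ?thesis .
qed

definition Cd :: real where "Cd = (\<Sum>y\<in>IM2. \<bar>d y\<bar> * (of_int y)\<^sup>2) / 2"

lemma la_lb_diff: "\<bar>la t - lb t\<bar> \<le> Cd * t\<^sup>2"
proof -
  have "la t - lb t = - (\<Sum>y\<in>IM2. d y * (1 - cos (t * of_int y)))"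
    by (simp add: lam_eq lam_bar_eq d_def d_sum right_diff_distrib left_diff_distrib sum_subtractf r_sum qb_sum)
  then have "\<bar>la t - lb t\<bar> \<le> (\<Sum>y\<in>IM2. \<bar>d y * (1 - cos (t * of_int y))\<bar>)"
    by (simp add: sum_abs)
  also have "\<dots> \<le> (\<Sum>y\<in>IM2. \<bar>d y\<bar> * ((t * of_int y)\<^sup>2 / 2))"
  proof (intro sum_mono)
    fix y
    have "\<bar>1 - cos (t * of_int y)\<bar> \<le> (t * of_int y)\<^sup>2 / 2"
      using one_minus_cos_le[of "t * of_int y"] cos_le_one[of "t * of_int y"] by simp
    then show "\<bar>d y * (1 - cos (t * of_int y))\<bar> \<le> \<bar>d y\<bar> * ((t * of_int y)\<^sup>2 / 2)"
      by (simp only: abs_mult) (rule mult_left_mono[OF _ abs_ge_zero])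
  qed
  also have "\<dots> = (\<Sum>y\<in>IM2. (\<bar>d y\<bar> * (of_int y)\<^sup>2) * (t\<^sup>2 / 2))"
    by (intro sum.cong refl) (simp add: power_mult_distrib)
  also have "\<dots> = Cd * t\<^sup>2" unfolding sum_distrib_right[symmetric] Cd_def by simp
  finally show ?thesis .
qed

lemma lb_lower:
  assumes A1: "A1 \<mu>"
  shows "\<exists>c>0. \<forall>t\<in>{-pi..pi}. c * t\<^sup>2 \<le> 1 - lb t"
proof -
  have "Aq / 2 < Aq" using Aq_pos[OF A1] by simp
  from order_tendstoD(1)[OF f0_lim this]
  obtain \<delta> where \<delta>: "\<delta> > 0" "\<And>t. t \<noteq> 0 \<Longrightarrow> dist t 0 < \<delta> \<Longrightarrow> Aq / 2 < (1 - lb t) / t\<^sup>2"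
    unfolding eventually_at by auto
  define \<delta>' where "\<delta>' = min \<delta> pi"
  have \<delta>': "0 < \<delta>'" "\<delta>' \<le> pi" "\<delta>' \<le> \<delta>" using \<delta> pi_gt_zero by (auto simp: \<delta>'_def)
  define K where "K = {-pi..-\<delta>'} \<union> {\<delta>'..pi}"
  have "compact K" unfolding K_def by (intro compact_Un compact_Icc)
  moreover have "K \<noteq> {}" using \<delta>' by (auto simp: K_def)
  moreover have "continuous_on K (\<lambda>t. 1 - lb t)" by (intro continuous_intros)
  ultimately obtain t0 where t0: "t0 \<in> K" "\<And>t. t \<in> K \<Longrightarrow> 1 - lb t0 \<le> 1 - lb t"
    using continuous_attains_inf[of K "\<lambda>t. 1 - lb t"] by blast
  define m where "m = 1 - lb t0"
  have "t0 \<in> {-pi..pi}" "t0 \<noteq> 0" using t0(1) \<delta>' by (auto simp: K_def)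
  then have m: "m > 0" using lb_lt1[OF A1] by (simp add: m_def)
  define c where "c = min (Aq / 2) (m / pi\<^sup>2)"
  have c: "c > 0" using m Aq_pos[OF A1] by (simp add: c_def)
  have "c * t\<^sup>2 \<le> 1 - lb t" if t: "t \<in> {-pi..pi}" for t
  proof (cases "t = 0")
    case True then show ?thesis by (simp add: lb_0)
  next
    case False
    show ?thesis
    proof (cases "\<bar>t\<bar> < \<delta>'")
      case True
      then have "Aq / 2 < (1 - lb t) / t\<^sup>2" using \<delta>(2)[of t] False \<delta>' by simp
      then have "Aq / 2 * t\<^sup>2 \<le> 1 - lb t" using False by (simp add: field_simps)
      moreover have "c \<le> Aq / 2" unfolding c_def by (rule min.cobounded1)
      then have "c * t\<^sup>2 \<le> Aq / 2 * t\<^sup>2" by (intro mult_right_mono) auto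
      ultimately show ?thesis by linarith
    next
      case False
      then have "t \<in> K" using t by (auto simp: K_def)
      then have "m \<le> 1 - lb t" using t0(2) by (simp add: m_def)
      moreover have "c * t\<^sup>2 \<le> m / pi\<^sup>2 * pi\<^sup>2"
      proof (rule mult_mono)
        have "\<bar>t\<bar> \<le> pi" using t by auto
        then have "\<bar>t\<bar>\<^sup>2 \<le> pi\<^sup>2" by (intro power_mono) auto
        then show "t\<^sup>2 \<le> pi\<^sup>2" by simp
      qed (use m in \<open>auto simp: c_def\<close>)
      ultimately show ?thesis by simp
    qed
  qed
  then show ?thesis using c by blast
qed

end


lemma geom_partial_lim:
  fixes x :: real assumes "\<bar>x\<bar> < 1"
  shows "(\<lambda>m. \<Sum>i\<le>m. x ^ i) \<longlonglongrightarrow> 1 / (1 - x)"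
proof -
  have "(\<lambda>n. \<Sum>i<n. x ^ i) \<longlonglongrightarrow> 1 / (1 - x)"
    using geometric_sums[of x] assms by (simp add: sums_def)
  then show ?thesis using LIMSEQ_lessThan_iff_atMost[of "\<lambda>A. \<Sum>i\<in>A. x ^ i"] by simp
qed

lemma geom_bound:
  fixes x :: real assumes "0 \<le> x" "x < 1"
  shows "(\<Sum>i\<le>m. x ^ i) \<le> 1 / (1 - x)"
proof -
  have "(\<Sum>i\<le>m. x ^ i) = (1 - x ^ Suc m) / (1 - x)" using sum_gp0[of x m] assms by simp
  also have "\<dots> \<le> 1 / (1 - x)" using assms by (intro divide_right_mono) auto
  finally show ?thesis .
qed

context envL
begin

lemma Cd_nonneg: "0 \<le> Cd" unfolding Cd_def by (intro divide_nonneg_pos sum_nonneg mult_nonneg_nonneg) auto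

definition gb :: "real \<Rightarrow> real" where "gb t = (la t - lb t) / (1 - lb t)"

lemma Sm_lim_int:
  assumes A1: "A1 \<mu>"
  shows "gb integrable_on {-pi..pi}" "Sm \<longlonglongrightarrow> 1 / (2 * pi) * integral {-pi..pi} gb"
proof -
  obtain c where c: "c > 0" "\<And>t. t \<in> {-pi..pi} \<Longrightarrow> c * t\<^sup>2 \<le> 1 - lb t" using lb_lower[OF A1] by blast
  define f where "f m t = (la t - lb t) * (\<Sum>i\<le>m. lb t ^ i)" for m t
  have fi: "f m integrable_on {-pi..pi}" for m
    unfolding f_def by (intro integrable_continuous_interval continuous_intros)
  have hi: "(\<lambda>t. Cd / c) integrable_on {-pi..pi}" by (intro integrable_continuous_interval continuous_intros)
  have le: "norm (f m t) \<le> Cd / c" if t: "t \<in> {-pi..pi}" for m t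
  proof (cases "t = 0")
    case True
    have "0 \<le> Cd" unfolding Cd_def by (intro divide_nonneg_pos sum_nonneg mult_nonneg_nonneg) auto
    with True show ?thesis using c by (simp add: f_def la_0 lb_0)
  next
    case False
    have lt: "lb t < 1" by (rule lb_lt1[OF A1 t False])
    have pos: "0 < c * t\<^sup>2" using c False by simp
    have "norm (f m t) = \<bar>la t - lb t\<bar> * (\<Sum>i\<le>m. lb t ^ i)"
      unfolding f_def by (simp add: abs_mult sum_nonneg lb_nonneg)
    also have "\<dots> \<le> (Cd * t\<^sup>2) * (1 / (1 - lb t))"
      by (intro mult_mono la_lb_diff geom_bound lb_nonneg lt) (auto intro!: sum_nonneg simp: lb_nonneg Cd_nonneg)
    also have "\<dots> \<le> (Cd * t\<^sup>2) * (1 / (c * t\<^sup>2))"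
    proof (intro mult_left_mono divide_left_mono)
      show "c * t\<^sup>2 \<le> 1 - lb t" by (rule c(2)[OF t])
      show "0 \<le> Cd * t\<^sup>2" using la_lb_diff[of t] by (meson abs_ge_zero order_trans)
    qed (use pos lt in auto)
    also have "\<dots> = Cd / c" using False c by (simp add: field_simps)
    finally show ?thesis .
  qed
  have conv: "(\<lambda>m. f m t) \<longlonglongrightarrow> gb t" if t: "t \<in> {-pi..pi}" for t
  proof (cases "t = 0")
    case True then show ?thesis by (simp add: f_def gb_def la_0 lb_0)
  next
    case False
    have lt: "lb t < 1" by (rule lb_lt1[OF A1 t False])
    have "\<bar>lb t\<bar> < 1" using lt lb_nonneg[of t] by simp
    from tendsto_mult_left[OF geom_partial_lim[OF this], of "la t - lb t"]
    show ?thesis by (simp add: f_def gb_def)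
  qed
  note dc = dominated_convergence[OF fi hi le conv]
  show "gb integrable_on {-pi..pi}" by (rule dc(1))
  have "Sm = (\<lambda>m. 1 / (2 * pi) * integral {-pi..pi} (f m))"
    by (rule ext) (simp add: Sm_int f_def[abs_def])
  then show "Sm \<longlonglongrightarrow> 1 / (2 * pi) * integral {-pi..pi} gb"
    using tendsto_mult_left[OF dc(2), of "1 / (2 * pi)"] by simp
qed

lemma beta_eq:
  assumes A1: "A1 \<mu>"
  shows "beta \<mu> = 1 - 1 / (2 * pi) * integral {-pi..pi} gb"
    "(\<lambda>t. (1 - la t) / (1 - lb t)) integrable_on {-pi..pi}"
proof -
  have eq: "(1 - la t) / (1 - lb t) = 1 - gb t" if "t \<in> {-pi..pi} - {0}" for t
  proof -
    have "lb t < 1" using lb_lt1[OF A1] that by auto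
    then show ?thesis by (simp add: gb_def field_simps)
  qed
  have gi: "gb integrable_on {-pi..pi}" by (rule Sm_lim_int(1)[OF A1])
  have i1: "(\<lambda>t. 1 - gb t) integrable_on {-pi..pi}"
    by (intro integrable_diff gi integrable_continuous_interval continuous_intros)
  show "(\<lambda>t. (1 - la t) / (1 - lb t)) integrable_on {-pi..pi}"
    by (rule integrable_spike[OF i1 negligible_sing[of 0]]) (use eq in auto)
  have "integral {-pi..pi} (\<lambda>t. (1 - la t) / (1 - lb t)) = integral {-pi..pi} (\<lambda>t. 1 - gb t)"
    by (rule integral_spike[OF negligible_sing[of 0]]) (use eq in auto)
  also have "\<dots> = 2 * pi - integral {-pi..pi} gb"
    by (subst integral_diff) (use gi in auto)
  finally show "beta \<mu> = 1 - 1 / (2 * pi) * integral {-pi..pi} gb"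
    unfolding beta_def by (simp add: field_simps)
qed

lemma Sm_lim:
  assumes A1: "A1 \<mu>"
  shows "Sm \<longlonglongrightarrow> 1 - beta \<mu>"
  using Sm_lim_int(2)[OF A1] beta_eq(1)[OF A1] by simp

lemma r0_lt1:
  assumes A2: "A2 M \<mu>"
  shows "r 0 < 1"
proof -
  define A where "A = {u \<in> space \<mu>. Max ((\<lambda>j. u j) ` {-int M..int M}) < 1}"
  have mA: "measure \<mu> A > 0" using A2 by (simp add: A2_def A_def)
  then have Ain: "A \<in> sets \<mu>" using measure_notin_sets by fastforce
  have eA: "emeasure \<mu> A \<noteq> 0" using mA by (simp add: emeasure_eq_measure)
  have "r 0 = (\<integral>u. (\<Sum>z\<in>IM. u z * u z) \<partial>\<mu>)"
    unfolding r_eq E2_def by (simp add: Bochner_Integration.integral_sum int_eval2)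
  also have "\<dots> < (\<integral>u. 1 \<partial>\<mu>)"
  proof (rule integral_less_AE[where A=A])
    show "integrable \<mu> (\<lambda>u. \<Sum>z\<in>IM. u z * u z)" by (rule Bochner_Integration.integrable_sum) (rule int_eval2)
    show "integrable \<mu> (\<lambda>u. 1::real)" by simp
    show "emeasure \<mu> A \<noteq> 0" by fact
    show "A \<in> sets \<mu>" by fact
    have key: "(\<Sum>z\<in>IM. u z * u z) \<le> Max ((\<lambda>j. u j) ` IM)"
      if "\<forall>y. 0 \<le> u y" "sum u IM = 1" for u :: "int \<Rightarrow> real"
    proof -
      have "u z * u z \<le> u z * Max ((\<lambda>j. u j) ` IM)" if "z \<in> IM" for z
        by (rule mult_left_mono) (use that \<open>\<forall>y. 0 \<le> u y\<close> in auto)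
      then have "(\<Sum>z\<in>IM. u z * u z) \<le> (\<Sum>z\<in>IM. u z * Max ((\<lambda>j. u j) ` IM))"
        by (rule sum_mono)
      also have "\<dots> = Max ((\<lambda>j. u j) ` IM)" using that by (simp flip: sum_distrib_right)
      finally show ?thesis .
    qed
    have key2: "(\<Sum>z\<in>IM. u z * u z) \<le> 1"
      if "\<forall>y. 0 \<le> u y" "\<forall>y. u y \<le> 1" "sum u IM = 1" for u :: "int \<Rightarrow> real"
    proof -
      have "(\<Sum>z\<in>IM. u z * u z) \<le> (\<Sum>z\<in>IM. u z * 1)"
        by (intro sum_mono mult_left_mono) (use that in auto)
      then show ?thesis using that by simp
    qed
    show "AE u in \<mu>. u \<in> A \<longrightarrow> (\<Sum>z\<in>IM. u z * u z) \<noteq> 1"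
      using AE_nonneg AE_sum
    proof eventually_elim
      case (elim u)
      show ?case
      proof
        assume "u \<in> A"
        then have "Max ((\<lambda>j. u j) ` IM) < 1" by (simp add: A_def IM_def)
        then show "(\<Sum>z\<in>IM. u z * u z) \<noteq> 1" using key[OF elim] by simp
      qed
    qed
    show "AE u in \<mu>. (\<Sum>z\<in>IM. u z * u z) \<le> 1"
      using AE_nonneg AE_le1 AE_sum by eventually_elim (rule key2)
  qed
  finally show ?thesis using prob_space by simp
qed

lemma beta_pos:
  assumes A1: "A1 \<mu>" and A2: "A2 M \<mu>"
  shows "beta \<mu> > 0"
proof -
  have le: "1 - la t \<le> (1 - la t) / (1 - lb t)" if "t \<in> {-pi..pi}" for t
  proof (cases "t = 0")
    case True then show ?thesis by (simp add: la_0)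
  next
    case False
    have "lb t < 1" using lb_lt1[OF A1 that False] .
    moreover have "0 \<le> 1 - la t" using la_le1[of t] by simp
    ultimately show ?thesis using lb_nonneg[of t]
      by (simp add: le_divide_eq) (simp add: mult_left_le)
  qed
  have "integral {-pi..pi} (\<lambda>t. 1 - la t) \<le> integral {-pi..pi} (\<lambda>t. (1 - la t) / (1 - lb t))"
    by (rule integral_le[OF _ beta_eq(2)[OF A1] le])
       (auto intro!: integrable_continuous_interval continuous_intros)
  moreover have "integral {-pi..pi} (\<lambda>t. 1 - la t) = 2 * pi * (1 - r 0)"
  proof -
    have "integral {-pi..pi} la = (\<Sum>y\<in>IM2. integral {-pi..pi} (\<lambda>t. r y * cos (t * of_int y)))"
      unfolding la_fun by (rule integral_sum) (auto intro!: integrable_continuous_interval continuous_intros)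
    also have "\<dots> = (\<Sum>y\<in>IM2. r y * (if y = 0 then 2 * pi else 0))"
      by (simp add: int_cos)
    also have "\<dots> = 2 * pi * r 0" by (simp add: if_distrib sum.delta IM2_def cong: if_cong)
    finally have "integral {-pi..pi} la = 2 * pi * r 0" .
    moreover have "integral {-pi..pi} (\<lambda>t. 1 - la t) = integral {-pi..pi} (\<lambda>t. 1) - integral {-pi..pi} la"
      by (rule integral_diff) (auto intro!: integrable_continuous_interval continuous_intros)
    ultimately show ?thesis by (simp add: algebra_simps)
  qed
  ultimately have "2 * pi * (1 - r 0) \<le> integral {-pi..pi} (\<lambda>t. (1 - la t) / (1 - lb t))" by simp
  moreover have "0 < 2 * pi * (1 - r 0)" using r0_lt1[OF A2] by simp
  ultimately show ?thesis unfolding beta_def by simp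
qed

end


lemma std_int: "integrable lborel std_normal_density"
  using integrable_normal_density[of 1 0] by simp

lemma gauss_cos_std: "(\<integral>u. std_normal_density u * cos (\<theta> * u) \<partial>lborel) = exp (- \<theta>\<^sup>2 / 2)"
proof -
  have int: "integrable lborel (\<lambda>u. std_normal_density u *\<^sub>R iexp (\<theta> * u))"
  proof (rule Bochner_Integration.integrable_bound[OF std_int])
    show "AE x in lborel. norm (std_normal_density x *\<^sub>R iexp (\<theta> * x)) \<le> norm (std_normal_density x)"
      by (simp add: norm_exp_i_times)
  qed measurable
  have "char std_normal_distribution \<theta> = (\<integral>u. std_normal_density u *\<^sub>R iexp (\<theta> * u) \<partial>lborel)"
    unfolding char_def
  proof (rule integral_density)
    show "(\<lambda>x. iexp (\<theta> * x)) \<in> borel_measurable lborel"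
      by measurable
  qed auto
  then have "(\<integral>u. std_normal_density u *\<^sub>R iexp (\<theta> * u) \<partial>lborel) = complex_of_real (exp (- \<theta>\<^sup>2 / 2))"
    using char_std_normal_distribution by simp
  then have "Re (\<integral>u. std_normal_density u *\<^sub>R iexp (\<theta> * u) \<partial>lborel) = exp (- \<theta>\<^sup>2 / 2)" by simp
  moreover have "Re (\<integral>u. std_normal_density u *\<^sub>R iexp (\<theta> * u) \<partial>lborel) =
      (\<integral>u. Re (std_normal_density u *\<^sub>R iexp (\<theta> * u)) \<partial>lborel)"
    by (rule integral_bounded_linear[OF bounded_linear_Re int, symmetric])
  moreover have "(\<lambda>u. Re (std_normal_density u *\<^sub>R iexp (\<theta> * u))) = (\<lambda>u. std_normal_density u * cos (\<theta> * u))"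
    by (rule ext) (simp add: Re_exp)
  ultimately show ?thesis by simp
qed

lemma int_std_cos: "integrable lborel (\<lambda>u. std_normal_density u * cos (\<theta> * u))"
proof (rule Bochner_Integration.integrable_bound[OF std_int])
  show "AE x in lborel. norm (std_normal_density x * cos (\<theta> * x)) \<le> norm (std_normal_density x)"
    by (auto simp: abs_mult intro!: mult_left_le)
qed measurable

lemma gauss_int:
  fixes b x :: real assumes b: "b > 0"
  shows "integrable lborel (\<lambda>s. exp (- b * s\<^sup>2) * cos (s * x))"
    "(\<integral>s. exp (- b * s\<^sup>2) * cos (s * x) \<partial>lborel) = sqrt (pi / b) * exp (- x\<^sup>2 / (4 * b))"
proof -
  define c where "c = sqrt (2 * b)"
  have c: "c > 0" "c\<^sup>2 = 2 * b" using b by (auto simp: c_def)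
  define f where "f s = exp (- b * s\<^sup>2) * cos (s * x)" for s
  have eq: "f (0 + (1 / c) * u) = sqrt (2 * pi) * (std_normal_density u * cos ((x / c) * u))" for u
  proof -
    have "- b * (u / c)\<^sup>2 = - u\<^sup>2 / 2" using c b by (simp add: power_divide field_simps)
    then show ?thesis unfolding f_def std_normal_density_def by (simp add: mult_ac)
  qed
  have i1: "integrable lborel (\<lambda>u. f (0 + (1 / c) * u))"
    unfolding eq by (intro integrable_mult_right int_std_cos)
  show "integrable lborel (\<lambda>s. exp (- b * s\<^sup>2) * cos (s * x))"
    using i1 lborel_integrable_real_affine_iff[of "1 / c" f 0] c by (simp add: f_def[abs_def])
  have "(\<integral>s. f s \<partial>lborel) = \<bar>1 / c\<bar> *\<^sub>R (\<integral>u. f (0 + (1 / c) * u) \<partial>lborel)"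
    by (rule lborel_integral_real_affine) (use c in auto)
  also have "\<dots> = (1 / c) * (sqrt (2 * pi) * exp (- (x / c)\<^sup>2 / 2))"
  proof -
    have "(\<integral>u. f (0 + (1 / c) * u) \<partial>lborel) = (\<integral>u. sqrt (2 * pi) * (std_normal_density u * cos ((x / c) * u)) \<partial>lborel)"
      by (simp only: eq)
    also have "\<dots> = sqrt (2 * pi) * (\<integral>u. std_normal_density u * cos ((x / c) * u) \<partial>lborel)"
      by (rule integral_mult_right_zero)
    also have "\<dots> = sqrt (2 * pi) * exp (- (x / c)\<^sup>2 / 2)"
      by (simp only: gauss_cos_std)
    finally show ?thesis using c by simp
  qed
  also have "\<dots> = sqrt (pi / b) * exp (- x\<^sup>2 / (4 * b))"
  proof -
    have "- (x / c)\<^sup>2 / 2 = - x\<^sup>2 / (4 * b)" using c by (simp add: power_divide)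
    moreover have "1 / c * sqrt (2 * pi) = sqrt (pi / b)"
      using b by (simp add: c_def real_sqrt_divide[symmetric] real_sqrt_mult field_simps)
    ultimately show ?thesis by (metis (no_types, lifting) mult.assoc)
  qed
  finally show "(\<integral>s. exp (- b * s\<^sup>2) * cos (s * x) \<partial>lborel) = sqrt (pi / b) * exp (- x\<^sup>2 / (4 * b))"
    by (simp add: f_def)
qed

lemma inv1sq_int: "integrable lborel (\<lambda>s::real. inverse (1 + s\<^sup>2))"
proof -
  have "einterval (-\<infinity>) \<infinity> = (UNIV :: real set)" by (auto simp: einterval_def)
  then show ?thesis using integrable_inverse_1_plus_square by (simp add: set_integrable_def)
qed

lemma sqrt_int01: "integrable lborel (\<lambda>w::real. indicator {0..1} w * (1 / sqrt w))"
proof -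
  have "((\<lambda>w. 1 / sqrt w) has_integral (2 * sqrt 1 - 2 * sqrt 0)) {0..1::real}"
  proof (rule fundamental_theorem_of_calculus_interior)
    show "continuous_on {0..1} (\<lambda>w::real. 2 * sqrt w)" by (intro continuous_intros)
    fix w :: real assume "w \<in> {0<..<1}"
    then show "((\<lambda>w. 2 * sqrt w) has_vector_derivative 1 / sqrt w) (at w)"
      unfolding has_real_derivative_iff_has_vector_derivative[symmetric]
      by (auto intro!: derivative_eq_intros simp: field_simps)
  qed simp
  then have "(\<lambda>w. 1 / sqrt w) integrable_on {0..1::real}" by blast
  then have "(\<lambda>w. 1 / sqrt w) absolutely_integrable_on {0..1::real}"
    by (rule nonnegative_absolutely_integrable_1) simp
  then have "integrable lebesgue (\<lambda>w::real. indicator {0..1} w *\<^sub>R (1 / sqrt w))"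
    by (simp add: set_integrable_def)
  then show ?thesis by (subst (asm) integrable_completion) auto
qed


lemma sqrt_seq_top: "filterlim (\<lambda>n. sqrt (real n)) at_top sequentially"
  by (rule filterlim_compose[OF sqrt_at_top filterlim_real_sequentially])

lemma div_sqrt_0: "(\<lambda>n. (B::real) / sqrt (real n)) \<longlonglongrightarrow> 0"
  by (rule tendsto_divide_0[OF tendsto_const filterlim_at_top_imp_at_infinity[OF sqrt_seq_top]])

lemma div_n_0: fixes f :: "nat \<Rightarrow> real" assumes "f \<longlonglongrightarrow> L" shows "(\<lambda>n. f n / real n) \<longlonglongrightarrow> 0"
  by (rule tendsto_divide_0[OF assms filterlim_at_top_imp_at_infinity[OF filterlim_real_sequentially]])

lemma pow_lim:
  fixes y :: "nat \<Rightarrow> real"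
  assumes y: "y \<longlonglongrightarrow> L"
  shows "(\<lambda>n. (1 - y n / real n) ^ n) \<longlonglongrightarrow> exp (- L)"
proof -
  have z0: "(\<lambda>n. y n / real n) \<longlonglongrightarrow> 0" by (rule div_n_0[OF y])
  have ev: "eventually (\<lambda>n. \<bar>y n / real n\<bar> < 1/2) sequentially"
    using tendstoD[OF z0, of "1/2"] by (simp add: dist_real_def)
  have e2: "(\<lambda>n. 2 * (y n)\<^sup>2 / real n) \<longlonglongrightarrow> 0"
    by (rule div_n_0[where L="2 * L\<^sup>2"]) (intro tendsto_intros y)
  have bnd: "eventually (\<lambda>n. norm (real n * ln (1 - y n / real n) - (- y n)) \<le> 2 * (y n)\<^sup>2 / real n) sequentially"
    using ev eventually_gt_at_top[of 0]
  proof eventually_elim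
    case (elim n)
    have "\<bar>ln (1 + (- (y n / real n))) - (- (y n / real n))\<bar> \<le> 2 * (- (y n / real n))\<^sup>2"
      by (rule abs_ln_one_plus_x_minus_x_bound) (use elim in auto)
    then have "real n * \<bar>ln (1 - y n / real n) + y n / real n\<bar> \<le> real n * (2 * (y n / real n)\<^sup>2)"
      by (intro mult_left_mono) auto
    moreover have "real n * \<bar>ln (1 - y n / real n) + y n / real n\<bar> = \<bar>real n * ln (1 - y n / real n) + y n\<bar>"
    proof -
      have "real n * \<bar>ln (1 - y n / real n) + y n / real n\<bar> = \<bar>real n * (ln (1 - y n / real n) + y n / real n)\<bar>"
        by (simp add: abs_mult)
      also have "real n * (ln (1 - y n / real n) + y n / real n) = real n * ln (1 - y n / real n) + y n"
        using elim by (simp add: distrib_left)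
      finally show ?thesis .
    qed
    moreover have "real n * (2 * (y n / real n)\<^sup>2) = 2 * (y n)\<^sup>2 / real n"
      using elim by (simp add: power2_eq_square field_simps)
    ultimately show ?case by simp
  qed
  have "(\<lambda>n. real n * ln (1 - y n / real n) - (- y n)) \<longlonglongrightarrow> 0"
    by (rule Lim_null_comparison[OF bnd e2])
  then have "(\<lambda>n. (real n * ln (1 - y n / real n) - (- y n)) + (- y n)) \<longlonglongrightarrow> 0 + (- L)"
    by (intro tendsto_add tendsto_minus y)
  then have "(\<lambda>n. exp (real n * ln (1 - y n / real n))) \<longlonglongrightarrow> exp (- L)"
    by (intro tendsto_exp) simp
  moreover have "eventually (\<lambda>n. exp (real n * ln (1 - y n / real n)) = (1 - y n / real n) ^ n) sequentially"
    using ev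
  proof eventually_elim
    case (elim n)
    then have "0 < 1 - y n / real n" by linarith
    then show ?case by (simp add: ln_realpow[symmetric])
  qed
  ultimately show ?thesis by (rule Lim_transform_eventually)
qed

lemma pow_lim_Suc:
  fixes y :: "nat \<Rightarrow> real"
  assumes y: "y \<longlonglongrightarrow> L"
  shows "(\<lambda>n. (1 - y n / real n) ^ Suc n) \<longlonglongrightarrow> exp (- L)"
proof -
  have "(\<lambda>n. (1 - y n / real n) ^ n * (1 - y n / real n)) \<longlonglongrightarrow> exp (- L) * (1 - 0)"
    by (intro tendsto_mult pow_lim[OF y] tendsto_diff tendsto_const div_n_0[OF y])
  then show ?thesis by (simp add: mult.commute)
qed


context envL
begin

lemma cont_lb'[continuous_intros]: "continuous_on A f \<Longrightarrow> continuous_on A (\<lambda>x. lb (f x))"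
  by (rule continuous_on_compose2[OF cont_lb[of UNIV]]) auto

lemma meas_lb[measurable]: "lb \<in> borel_measurable borel"
  by (rule borel_measurable_continuous_onI[OF cont_lb])

definition Fn :: "nat \<Rightarrow> real \<Rightarrow> real" where "Fn n t = (\<Sum>k\<le>n. lb t ^ k)"

definition phi :: "nat \<Rightarrow> int \<Rightarrow> real \<Rightarrow> real" where
  "phi n xn s = 1 / real n * Fn n (s / sqrt (real n)) * cos (s * of_int xn / sqrt (real n))"

lemma cont_Fn[continuous_intros]: "continuous_on A f \<Longrightarrow> continuous_on A (\<lambda>x. Fn n (f x))"
  unfolding Fn_def by (intro continuous_intros)

lemma meas_phi[measurable]: "phi n xn \<in> borel_measurable borel"
  unfolding phi_def Fn_def by measurable

lemma Fn_nonneg: "0 \<le> Fn n t" unfolding Fn_def by (intro sum_nonneg) (simp add: lb_nonneg)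

lemma Fn_le: "Fn n t \<le> real n + 1"
proof -
  have "Fn n t \<le> (\<Sum>k\<le>n. 1)" unfolding Fn_def
    by (intro sum_mono power_le_one lb_nonneg lb_le1)
  then show ?thesis by simp
qed

lemma Gbar_scaled:
  assumes n: "n \<ge> 1"
  shows "(\<Sum>k\<le>n. Qb k xn 0) / sqrt (real n) =
    1 / (2 * pi) * (\<integral>s. indicator {- pi * sqrt (real n)..pi * sqrt (real n)} s * phi n xn s \<partial>lborel)"
proof -
  define r where "r = sqrt (real n)"
  have r: "r > 0" using n by (simp add: r_def)
  define f where "f t = Fn n t * cos (t * of_int xn)" for t
  have "(\<Sum>k\<le>n. Qb k xn 0) = 1 / (2 * pi) * integral {-pi..pi} f"
    unfolding Gbar_int f_def Fn_def ..
  moreover have "integral ((\<lambda>x. x / (1 / r)) ` {-pi..pi}) (\<lambda>x. f (1 / r * x)) = (1 / \<bar>1 / r\<bar>) *\<^sub>R integral {-pi..pi} f"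
    by (rule integral_stretch_real) (use r in auto)
  moreover have "(\<lambda>x. x / (1 / r)) ` {-pi..pi} = {- pi * r..pi * r}"
  proof -
    have "(\<lambda>x. x / (1 / r)) ` {-pi..pi} = (*) r ` {-pi..pi}" by (rule image_cong) auto
    also have "\<dots> = {r * - pi..r * pi}" by (rule image_mult_atLeastAtMost[OF r])
    finally show ?thesis by (simp add: mult.commute)
  qed
  ultimately have I: "integral {- pi * r..pi * r} (\<lambda>x. f (1 / r * x)) = r * (2 * pi * (\<Sum>k\<le>n. Qb k xn 0))"
    using r by simp
  have phi_eq: "phi n xn s = 1 / real n * f (1 / r * s)" for s
    unfolding phi_def f_def r_def by (simp add: mult_ac)
  have cphi: "continuous_on {- pi * r..pi * r} (phi n xn)"
    unfolding phi_def by (intro continuous_intros) (use r in \<open>auto simp: r_def\<close>)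
  have "integral {- pi * r..pi * r} (phi n xn) = 1 / real n * (r * (2 * pi * (\<Sum>k\<le>n. Qb k xn 0)))"
    unfolding phi_eq I[symmetric] by simp
  moreover have "integral {- pi * r..pi * r} (phi n xn) = (\<integral>s. indicator {- pi * r..pi * r} s * phi n xn s \<partial>lborel)"
    using set_borel_integral_eq_integral(2)[OF borel_integrable_atLeastAtMost'[OF cphi]]
    by (simp add: set_lebesgue_integral_def)
  ultimately have "(\<integral>s. indicator {- pi * r..pi * r} s * phi n xn s \<partial>lborel) = r / real n * (2 * pi * (\<Sum>k\<le>n. Qb k xn 0))"
    by simp
  moreover have "r / real n = 1 / r" using r n by (simp add: r_def field_simps)
  ultimately have eqL: "(\<integral>s. indicator {- pi * r..pi * r} s * phi n xn s \<partial>lborel) = 1 / r * (2 * pi * (\<Sum>k\<le>n. Qb k xn 0))"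
    by simp
  show ?thesis unfolding r_def[symmetric] eqL using r by simp
qed

end


context envL
begin

definition Egen :: "real \<Rightarrow> real" where
  "Egen s = (if s = 0 then 1 else (1 - exp (- Aq * s\<^sup>2)) / (Aq * s\<^sup>2))"

definition gx :: "real \<Rightarrow> real \<Rightarrow> real" where "gx x s = Egen s * cos (s * x)"

lemma meas_gx[measurable]: "gx x \<in> borel_measurable borel"
  unfolding gx_def Egen_def by measurable

lemma phi_bound:
  assumes c: "c > 0" "\<And>t. t \<in> {-pi..pi} \<Longrightarrow> c * t\<^sup>2 \<le> 1 - lb t" and A1: "A1 \<mu>"
  shows "\<bar>indicator {- pi * sqrt (real n)..pi * sqrt (real n)} s * phi n xn s\<bar> \<le> (4 + 2 / c) * inverse (1 + s\<^sup>2)"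
proof -
  define K where "K = 4 + 2 / c"
  have "0 < 2 / c" using c(1) by simp
  then have K: "K > 0" unfolding K_def by linarith
  have W0: "0 \<le> K * inverse (1 + s\<^sup>2)" using K by (simp add: add_pos_nonneg)
  show ?thesis
  proof (cases "s \<in> {- pi * sqrt (real n)..pi * sqrt (real n)} \<and> n \<ge> 1")
    case False
    then have "indicator {- pi * sqrt (real n)..pi * sqrt (real n)} s * phi n xn s = 0"
      by (cases "n = 0") (auto simp: phi_def)
    then have "\<bar>indicator {- pi * sqrt (real n)..pi * sqrt (real n)} s * phi n xn s\<bar> = 0" by simp
    with W0 show ?thesis unfolding K_def by linarith
  next
    case True
    then have sI: "\<bar>s\<bar> \<le> pi * sqrt (real n)" and n: "n \<ge> 1" by auto
    define r where "r = sqrt (real n)"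
    have r: "r > 0" "r\<^sup>2 = real n" using n by (auto simp: r_def)
    define t where "t = s / r"
    have tI: "t \<in> {-pi..pi}"
    proof -
      have "\<bar>t\<bar> = \<bar>s\<bar> / r" using r by (simp add: t_def abs_div)
      also have "\<dots> \<le> pi" using sI r by (simp add: r_def divide_le_eq mult.commute)
      finally show ?thesis by auto
    qed
    define E where "E = 1 / real n * Fn n t"
    have E0: "0 \<le> E" by (simp add: E_def Fn_nonneg)
    have phiE: "\<bar>phi n xn s\<bar> \<le> E"
    proof -
      have "\<bar>phi n xn s\<bar> = E * \<bar>cos (s * of_int xn / sqrt (real n))\<bar>"
        unfolding phi_def E_def t_def r_def using Fn_nonneg by (simp add: abs_mult)
      also have "\<dots> \<le> E * 1" by (intro mult_left_mono E0) simp
      finally show ?thesis by simp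
    qed
    have E2: "E \<le> 2"
    proof -
      have "E \<le> 1 / real n * (real n + 1)" unfolding E_def by (intro mult_left_mono Fn_le) simp
      also have "\<dots> \<le> 2" using n by (simp add: field_simps)
      finally show ?thesis .
    qed
    have "E \<le> K * inverse (1 + s\<^sup>2)"
    proof (cases "s\<^sup>2 \<le> 1")
      case True
      have "2 \<le> K / 2" using c by (simp add: K_def)
      also have "K / 2 \<le> K * inverse (1 + s\<^sup>2)"
      proof -
        have "K * (1 + s\<^sup>2) \<le> K * 2" by (rule mult_left_mono) (use True K in auto)
        moreover have "0 < 1 + s\<^sup>2" by (simp add: add_pos_nonneg)
        ultimately show ?thesis by (simp add: field_simps)
      qed
      finally show ?thesis using E2 by simp
    next
      case False
      then have s0: "s \<noteq> 0" by auto
      then have t0: "t \<noteq> 0" using r by (simp add: t_def)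
      have lt: "lb t < 1" by (rule lb_lt1[OF A1 tI t0])
      have ct: "0 < c * t\<^sup>2" using c t0 by simp
      have "Fn n t \<le> 1 / (1 - lb t)" unfolding Fn_def by (rule geom_bound[OF lb_nonneg lt])
      also have "\<dots> \<le> 1 / (c * t\<^sup>2)" by (rule divide_left_mono) (use c(2)[OF tI] ct lt in auto)
      finally have "E \<le> 1 / real n * (1 / (c * t\<^sup>2))" unfolding E_def by (intro mult_left_mono) auto
      also have "\<dots> = 1 / (c * s\<^sup>2)" using r n by (simp add: t_def power_divide field_simps)
      also have "\<dots> \<le> K * inverse (1 + s\<^sup>2)"
      proof -
        have "1 + s\<^sup>2 \<le> K * c * s\<^sup>2"
        proof -
          have "K * c = 4 * c + 2" using c by (simp add: K_def field_simps)
          then have "K * c * s\<^sup>2 = (4 * c) * s\<^sup>2 + 2 * s\<^sup>2" by (simp add: algebra_simps)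
          moreover have "0 \<le> (4 * c) * s\<^sup>2" using c by simp
          ultimately show ?thesis using False by linarith
        qed
        moreover have "0 < 1 + s\<^sup>2" by (simp add: add_pos_nonneg)
        ultimately have "1 \<le> K * (c * s\<^sup>2) / (1 + s\<^sup>2)" by (simp add: le_divide_eq mult.assoc)
        then show ?thesis using c s0 by (simp add: field_simps)
      qed
      finally show ?thesis .
    qed
    then show ?thesis using phiE True by (simp add: K_def)
  qed
qed

lemma ev_interval: "eventually (\<lambda>n. 1 \<le> n \<and> \<bar>s\<bar> \<le> pi * sqrt (real n)) sequentially"
proof -
  define N where "N = nat \<lceil>s\<^sup>2\<rceil> + 1"
  have "1 \<le> n \<and> \<bar>s\<bar> \<le> pi * sqrt (real n)" if "n \<ge> N" for n
  proof
    show "1 \<le> n" using that by (simp add: N_def)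
    have "s\<^sup>2 \<le> real n" using that unfolding N_def by linarith
    then have "sqrt (s\<^sup>2) \<le> sqrt (real n)" by (rule real_sqrt_le_mono)
    then have "\<bar>s\<bar> \<le> sqrt (real n)" by simp
    also have "\<dots> = 1 * sqrt (real n)" by simp
    also have "\<dots> \<le> pi * sqrt (real n)" by (rule mult_right_mono) (use pi_gt3 in auto)
    finally show "\<bar>s\<bar> \<le> pi * sqrt (real n)" .
  qed
  then show ?thesis unfolding eventually_sequentially by blast
qed

lemma En_lim:
  assumes A1: "A1 \<mu>"
  shows "(\<lambda>n. 1 / real n * Fn n (s / sqrt (real n))) \<longlonglongrightarrow> Egen s"
proof (cases "s = 0")
  case True
  have "Fn n 0 = real n + 1" for n by (simp add: Fn_def lb_0)
  then have "(\<lambda>n. 1 / real n * Fn n (s / sqrt (real n))) = (\<lambda>n. 1 / real n * (real n + 1))"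
    using True by simp
  moreover have "(\<lambda>n. 1 + 1 / real n) \<longlonglongrightarrow> 1 + 0" by (intro tendsto_intros)
  moreover have "eventually (\<lambda>n. 1 + 1 / real n = 1 / real n * (real n + 1)) sequentially"
    using eventually_gt_at_top[of 0] by eventually_elim (simp add: field_simps)
  ultimately show ?thesis using True by (simp add: Egen_def Lim_transform_eventually)
next
  case False
  define t where "t n = s / sqrt (real n)" for n
  have t0: "t \<longlonglongrightarrow> 0" unfolding t_def by (rule div_sqrt_0)
  have tne: "eventually (\<lambda>n. t n \<noteq> 0) sequentially"
    using eventually_gt_at_top[of 0] by eventually_elim (use False in \<open>simp add: t_def\<close>)
  have tlim: "filterlim t (at 0) sequentially" by (rule filterlim_atI[OF t0 tne])
  define y where "y n = real n * (1 - lb (t n))" for n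
  have "(\<lambda>n. s\<^sup>2 * ((1 - lb (t n)) / (t n)\<^sup>2)) \<longlonglongrightarrow> s\<^sup>2 * Aq"
    by (intro tendsto_mult_left filterlim_compose[OF f0_lim tlim])
  moreover have "eventually (\<lambda>n. s\<^sup>2 * ((1 - lb (t n)) / (t n)\<^sup>2) = y n) sequentially"
    using eventually_gt_at_top[of 0] by eventually_elim (use False in \<open>simp add: t_def y_def power_divide field_simps\<close>)
  ultimately have ylim: "y \<longlonglongrightarrow> s\<^sup>2 * Aq" by (rule Lim_transform_eventually)
  have pos: "s\<^sup>2 * Aq \<noteq> 0" using False Aq_pos[OF A1] by simp
  have "(\<lambda>n. (1 - (1 - y n / real n) ^ Suc n) / y n) \<longlonglongrightarrow> (1 - exp (- (s\<^sup>2 * Aq))) / (s\<^sup>2 * Aq)"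
    by (intro tendsto_divide tendsto_diff tendsto_const pow_lim_Suc ylim pos)
  moreover have "eventually (\<lambda>n. (1 - (1 - y n / real n) ^ Suc n) / y n = 1 / real n * Fn n (s / sqrt (real n))) sequentially"
    using ev_interval[of s]
  proof eventually_elim
    case (elim n)
    have tI: "t n \<in> {-pi..pi}"
    proof -
      have "\<bar>t n\<bar> = \<bar>s\<bar> / sqrt (real n)" by (simp add: t_def abs_div)
      also have "\<dots> \<le> pi" using elim by (simp add: divide_le_eq mult.commute)
      finally show ?thesis by auto
    qed
    have tn0: "t n \<noteq> 0" using False elim by (simp add: t_def)
    have lt: "lb (t n) < 1" by (rule lb_lt1[OF A1 tI tn0])
    have eq1: "1 - y n / real n = lb (t n)" using elim by (simp add: y_def)
    have Fn_eq: "Fn n (t n) = (1 - lb (t n) ^ Suc n) / (1 - lb (t n))"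
      unfolding Fn_def using sum_gp0[of "lb (t n)" n] lt by simp
    have "(1 - lb (t n) ^ Suc n) / y n = ((1 - lb (t n) ^ Suc n) / (1 - lb (t n))) / real n"
      by (simp add: y_def divide_divide_eq_left mult.commute)
    also have "\<dots> = 1 / real n * Fn n (t n)" by (simp add: Fn_eq)
    finally show ?case unfolding eq1 by (simp add: t_def)
  qed
  ultimately have "(\<lambda>n. 1 / real n * Fn n (s / sqrt (real n))) \<longlonglongrightarrow> (1 - exp (- (s\<^sup>2 * Aq))) / (s\<^sup>2 * Aq)"
    by (rule Lim_transform_eventually)
  then show ?thesis using False by (simp add: Egen_def mult.commute)
qed

lemma phi_lim:
  assumes A1: "A1 \<mu>" and B: "\<And>n. \<bar>real_of_int (xs n) - sqrt (real n) * x\<bar> \<le> B"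
  shows "(\<lambda>n. indicator {- pi * sqrt (real n)..pi * sqrt (real n)} s * phi n (xs n) s) \<longlonglongrightarrow> gx x s"
proof -
  have xl: "(\<lambda>n. of_int (xs n) / sqrt (real n)) \<longlonglongrightarrow> x"
  proof -
    have "(\<lambda>n. of_int (xs n) / sqrt (real n) - x) \<longlonglongrightarrow> 0"
    proof (rule Lim_null_comparison[OF _ div_sqrt_0[of B]])
      show "eventually (\<lambda>n. norm (of_int (xs n) / sqrt (real n) - x) \<le> B / sqrt (real n)) sequentially"
        using eventually_gt_at_top[of 0]
      proof eventually_elim
        case (elim n)
        have "of_int (xs n) / sqrt (real n) - x = (of_int (xs n) - sqrt (real n) * x) / sqrt (real n)"
          using elim by (simp add: field_simps)
        then show ?case using B[of n] elim by (simp add: abs_div divide_right_mono)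
      qed
    qed
    then show ?thesis by (simp add: LIM_zero_iff)
  qed
  have "(\<lambda>n. (1 / real n * Fn n (s / sqrt (real n))) * cos (s * (of_int (xs n) / sqrt (real n)))) \<longlonglongrightarrow> Egen s * cos (s * x)"
    by (intro tendsto_mult En_lim[OF A1] tendsto_cos tendsto_mult_left xl)
  moreover have "eventually (\<lambda>n. (1 / real n * Fn n (s / sqrt (real n))) * cos (s * (of_int (xs n) / sqrt (real n)))
      = indicator {- pi * sqrt (real n)..pi * sqrt (real n)} s * phi n (xs n) s) sequentially"
    using ev_interval[of s] by eventually_elim (auto simp: phi_def indicator_def)
  ultimately show ?thesis unfolding gx_def by (rule Lim_transform_eventually)
qed

lemma main_conv:
  assumes A1: "A1 \<mu>" and B: "\<And>n. \<bar>real_of_int (xs n) - sqrt (real n) * x\<bar> \<le> B"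
  shows "integrable lborel (gx x)"
    "(\<lambda>n. (\<Sum>k\<le>n. Qb k (xs n) 0) / sqrt (real n)) \<longlonglongrightarrow> 1 / (2 * pi) * (\<integral>s. gx x s \<partial>lborel)"
proof -
  obtain c where c: "c > 0" "\<And>t. t \<in> {-pi..pi} \<Longrightarrow> c * t\<^sup>2 \<le> 1 - lb t" using lb_lower[OF A1] by blast
  define sq where "sq n s = indicator {- pi * sqrt (real n)..pi * sqrt (real n)} s * phi n (xs n) s" for n s
  have wi: "integrable lborel (\<lambda>s::real. (4 + 2 / c) * inverse (1 + s\<^sup>2))"
    by (intro integrable_mult_right inv1sq_int)
  have m1: "gx x \<in> borel_measurable lborel" by simp
  have m2: "sq n \<in> borel_measurable lborel" for n unfolding sq_def by simp
  have lim: "AE s in lborel. (\<lambda>n. sq n s) \<longlonglongrightarrow> gx x s"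
    unfolding sq_def using phi_lim[OF A1 B] by simp
  have bnd: "AE s in lborel. norm (sq n s) \<le> (4 + 2 / c) * inverse (1 + s\<^sup>2)" for n
    unfolding sq_def using phi_bound[OF c A1] by simp
  show "integrable lborel (gx x)"
    by (rule integrable_dominated_convergence[OF m1 m2 wi lim bnd])
  have conv: "(\<lambda>n. \<integral>s. sq n s \<partial>lborel) \<longlonglongrightarrow> (\<integral>s. gx x s \<partial>lborel)"
    by (rule integral_dominated_convergence[OF m1 m2 wi lim bnd])
  have "(\<lambda>n. 1 / (2 * pi) * (\<integral>s. sq n s \<partial>lborel)) \<longlonglongrightarrow> 1 / (2 * pi) * (\<integral>s. gx x s \<partial>lborel)"
    by (rule tendsto_mult_left[OF conv])
  moreover have "eventually (\<lambda>n. 1 / (2 * pi) * (\<integral>s. sq n s \<partial>lborel) = (\<Sum>k\<le>n. Qb k (xs n) 0) / sqrt (real n)) sequentially"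
    using eventually_ge_at_top[of 1] by eventually_elim (simp add: Gbar_scaled sq_def)
  ultimately show "(\<lambda>n. (\<Sum>k\<le>n. Qb k (xs n) 0) / sqrt (real n)) \<longlonglongrightarrow> 1 / (2 * pi) * (\<integral>s. gx x s \<partial>lborel)"
    by (rule Lim_transform_eventually)
qed

end


lemma exp_int01:
  fixes b :: real assumes b: "b \<ge> 0"
  shows "(\<integral>w. indicator {0..1} w * exp (- b * w) \<partial>lborel) = (if b = 0 then 1 else (1 - exp (- b)) / b)"
proof -
  have ci: "continuous_on {0..1::real} (\<lambda>w. exp (- b * w))" by (intro continuous_intros)
  have "(\<integral>w. indicator {0..1} w * exp (- b * w) \<partial>lborel) = integral {0..1} (\<lambda>w. exp (- b * w))"
    using set_borel_integral_eq_integral(2)[OF borel_integrable_atLeastAtMost'[OF ci]]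
    by (simp add: set_lebesgue_integral_def)
  also have "\<dots> = (if b = 0 then 1 else (1 - exp (- b)) / b)"
  proof (cases "b = 0")
    case True then show ?thesis by simp
  next
    case False
    have "((\<lambda>w. exp (- b * w)) has_integral ((- exp (- b * 1) / b) - (- exp (- b * 0) / b))) {0..1}"
    proof (rule fundamental_theorem_of_calculus)
      fix w :: real
      show "((\<lambda>w. - exp (- b * w) / b) has_vector_derivative exp (- b * w)) (at w within {0..1})"
        unfolding has_real_derivative_iff_has_vector_derivative[symmetric]
        using False by (auto intro!: derivative_eq_intros simp: field_simps)
    qed simp
    then show ?thesis using False by (simp add: integral_unique field_simps)
  qed
  finally show ?thesis .
qed

lemma fubini_gauss:
  fixes a x :: real assumes a: "a > 0"
  defines "G \<equiv> (\<lambda>w. sqrt (pi / (a * w)) * exp (- x\<^sup>2 / (4 * (a * w))))"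
  shows "integrable lborel (\<lambda>w. indicator {0..1} w * G w)"
    "(\<integral>s. (if s = 0 then 1 else (1 - exp (- a * s\<^sup>2)) / (a * s\<^sup>2)) * cos (s * x) \<partial>lborel)
       = (\<integral>w. indicator {0..1} w * G w \<partial>lborel)"
proof -
  define Phi where "Phi w s = indicator {0..1} w * (exp (- (a * w) * s\<^sup>2) * cos (s * x))" for w s :: real
  have mPhi[measurable]: "(\<lambda>(w, s). Phi w s) \<in> borel_measurable (lborel \<Otimes>\<^sub>M lborel)"
    unfolding Phi_def by measurable
  have gi: "integrable lborel (\<lambda>s. exp (- (a * w) * s\<^sup>2) * cos (s * y))" if "w > 0" for w y
    using gauss_int(1)[of "a * w" y] that a by simp
  have gi0: "integrable lborel (\<lambda>s. exp (- (a * w) * s\<^sup>2))" if "w > 0" for w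
    using gi[OF that, of 0] by simp
  have gv0: "(\<integral>s. exp (- (a * w) * s\<^sup>2) \<partial>lborel) = sqrt (pi / (a * w))" if "w > 0" for w
    using gauss_int(2)[of "a * w" 0] that a by simp
  have inner_s: "(\<integral>s. Phi w s \<partial>lborel) = indicator {0..1} w * G w" if "w \<noteq> 0" for w
  proof (cases "w \<in> {0..1}")
    case True
    then have w: "w > 0" using that by auto
    have "(\<integral>s. Phi w s \<partial>lborel) = (\<integral>s. exp (- (a * w) * s\<^sup>2) * cos (s * x) \<partial>lborel)"
      unfolding Phi_def using True by simp
    also have "\<dots> = G w" unfolding G_def using gauss_int(2)[of "a * w" x] w a by simp
    finally show ?thesis using True by simp
  next
    case False then show ?thesis by (simp add: Phi_def)
  qed
  have int_inner: "AE w in lborel. integrable lborel (\<lambda>s. Phi w s)"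
    using AE_lborel_singleton[of 0]
  proof eventually_elim
    case (elim w)
    show ?case
    proof (cases "w \<in> {0..1}")
      case True
      then have "w > 0" using elim by auto
      then show ?thesis unfolding Phi_def using True gi by simp
    next
      case False then show ?thesis by (simp add: Phi_def)
    qed
  qed
  have maj: "integrable lborel (\<lambda>w. sqrt (pi / a) * (indicator {0..1} w * (1 / sqrt w)))"
    by (intro integrable_mult_right sqrt_int01)
  have int1: "integrable lborel (\<lambda>w. \<integral>s. norm (Phi w s) \<partial>lborel)"
  proof (rule Bochner_Integration.integrable_bound[OF maj])
    show "(\<lambda>w. \<integral>s. norm (Phi w s) \<partial>lborel) \<in> borel_measurable lborel"
      by measurable
    show "AE w in lborel. norm (\<integral>s. norm (Phi w s) \<partial>lborel) \<le> norm (sqrt (pi / a) * (indicator {0..1} w * (1 / sqrt w)))"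
      using AE_lborel_singleton[of 0]
    proof eventually_elim
      case (elim w)
      show ?case
      proof (cases "w \<in> {0..1}")
        case True
        then have w: "w > 0" using elim by auto
        have "(\<integral>s. norm (Phi w s) \<partial>lborel) \<le> (\<integral>s. exp (- (a * w) * s\<^sup>2) \<partial>lborel)"
        proof (rule integral_mono')
          show "integrable lborel (\<lambda>s. exp (- (a * w) * s\<^sup>2))" by (rule gi0[OF w])
          fix s :: real
          show "norm (Phi w s) \<le> exp (- (a * w) * s\<^sup>2)"
            unfolding Phi_def using True by (simp add: abs_mult mult_left_le)
        qed simp
        also have "\<dots> = sqrt (pi / a) * (1 / sqrt w)" using gv0[OF w] w a by (simp add: real_sqrt_divide real_sqrt_mult)
        finally show ?thesis using True w a by (simp add: integral_nonneg)
      next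
        case False then show ?thesis by (simp add: Phi_def)
      qed
    qed
  qed
  have intP: "integrable (lborel \<Otimes>\<^sub>M lborel) (\<lambda>(w, s). Phi w s)"
    by (rule lborel_pair.Fubini_integrable) (use mPhi int1 int_inner in auto)
  have fub: "(\<integral>s. (\<integral>w. Phi w s \<partial>lborel) \<partial>lborel) = (\<integral>w. (\<integral>s. Phi w s \<partial>lborel) \<partial>lborel)"
    by (rule lborel_pair.Fubini_integral[OF intP])
  have "integrable lborel (\<lambda>w. \<integral>s. Phi w s \<partial>lborel)"
    using lborel_pair.integrable_fst'[OF intP] by simp
  moreover have AEeq: "AE w in lborel. (\<integral>s. Phi w s \<partial>lborel) = indicator {0..1} w * G w"
    using AE_lborel_singleton[of 0] by eventually_elim (rule inner_s)
  ultimately show "integrable lborel (\<lambda>w. indicator {0..1} w * G w)"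
    by (subst integrable_cong_AE[symmetric]) (auto simp: G_def)
  have inner_w: "(\<integral>w. Phi w s \<partial>lborel) = (if s = 0 then 1 else (1 - exp (- a * s\<^sup>2)) / (a * s\<^sup>2)) * cos (s * x)" for s
  proof -
    have "(\<integral>w. Phi w s \<partial>lborel) = (\<integral>w. indicator {0..1} w * exp (- (a * s\<^sup>2) * w) \<partial>lborel) * cos (s * x)"
      unfolding Phi_def by (simp add: mult_ac)
    also have "\<dots> = (if s = 0 then 1 else (1 - exp (- a * s\<^sup>2)) / (a * s\<^sup>2)) * cos (s * x)"
      using a by (subst exp_int01) auto
    finally show ?thesis .
  qed
  have "(\<integral>s. (if s = 0 then 1 else (1 - exp (- a * s\<^sup>2)) / (a * s\<^sup>2)) * cos (s * x) \<partial>lborel)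
      = (\<integral>w. (\<integral>s. Phi w s \<partial>lborel) \<partial>lborel)"
    unfolding fub[symmetric] inner_w ..
  also have "\<dots> = (\<integral>w. indicator {0..1} w * G w \<partial>lborel)"
    by (rule integral_cong_AE[OF _ _ AEeq]) (auto simp: G_def)
  finally show "(\<integral>s. (if s = 0 then 1 else (1 - exp (- a * s\<^sup>2)) / (a * s\<^sup>2)) * cos (s * x) \<partial>lborel)
       = (\<integral>w. indicator {0..1} w * G w \<partial>lborel)" .
qed


lemma taub_ineq:
  fixes g :: "nat \<Rightarrow> real" and eps :: "nat \<Rightarrow> real"
  assumes g: "\<And>j. 0 \<le> g j" "\<And>j. g j \<le> 1"
    and C: "\<And>m. \<bar>eps m\<bar> \<le> C"
    and K: "\<And>m. m \<ge> K \<Longrightarrow> \<bar>eps m\<bar> \<le> \<delta>"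
    and d: "\<delta> \<ge> 0"
  shows "\<bar>\<Sum>j<n. g j * eps (n - 1 - j)\<bar> \<le> \<delta> * (\<Sum>j<n. g j) + real K * C"
proof -
  have C0: "0 \<le> C" using C[of 0] by linarith
  have "\<bar>\<Sum>j<n. g j * eps (n - 1 - j)\<bar> \<le> (\<Sum>j<n. \<bar>g j * eps (n - 1 - j)\<bar>)" by (rule sum_abs)
  also have "\<dots> \<le> (\<Sum>j<n. \<delta> * g j + (if n - 1 - j < K then C else 0))"
  proof (rule sum_mono)
    fix j
    show "\<bar>g j * eps (n - 1 - j)\<bar> \<le> \<delta> * g j + (if n - 1 - j < K then C else 0)"
    proof (cases "n - 1 - j < K")
      case True
      have "\<bar>g j * eps (n - 1 - j)\<bar> \<le> 1 * C"
        unfolding abs_mult using g[of j] C[of "n - 1 - j"] by (intro mult_mono) auto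
      moreover have "0 \<le> \<delta> * g j" using d g(1)[of j] by simp
      ultimately show ?thesis using True by simp
    next
      case False
      have "\<bar>g j * eps (n - 1 - j)\<bar> \<le> g j * \<delta>"
        unfolding abs_mult using g[of j] K[of "n - 1 - j"] False by (intro mult_mono) auto
      then show ?thesis using False by (simp add: mult.commute)
    qed
  qed
  also have "\<dots> = \<delta> * (\<Sum>j<n. g j) + (\<Sum>j<n. (if n - 1 - j < K then C else 0))"
    by (simp add: sum.distrib sum_distrib_left)
  also have "(\<Sum>j<n. (if n - 1 - j < K then C else 0)) = (\<Sum>m<n. (if m < K then C else 0))"
    using sum.nat_diff_reindex[of "\<lambda>m. if m < K then C else 0" n] by simp
  also have "\<dots> \<le> (\<Sum>m<K. C)"
  proof -
    have "(\<Sum>m<n. (if m < K then C else 0)) = (\<Sum>m\<in>{..<n} \<inter> {..<K}. C)"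
      using sum.inter_restrict[of "{..<n}" "\<lambda>_. C" "{..<K}"] by simp
    also have "\<dots> \<le> (\<Sum>m<K. C)" by (rule sum_mono2) (use C0 in auto)
    finally show ?thesis .
  qed
  finally show ?thesis by simp
qed

lemma taub:
  fixes G Gb :: "nat \<Rightarrow> real" and g :: "nat \<Rightarrow> nat \<Rightarrow> real" and S :: "nat \<Rightarrow> real"
  assumes \<beta>: "\<beta> > 0"
    and S: "S \<longlonglongrightarrow> 1 - \<beta>"
    and g: "\<And>n j. 0 \<le> g n j" "\<And>n j. g n j \<le> 1"
    and dec: "\<And>n. G n = Gb n + (\<Sum>j<n. g n j * S (n - 1 - j))"
    and Gdef: "\<And>n. G n = (\<Sum>j\<le>n. g n j)"
    and Gb: "(\<lambda>n. Gb n / sqrt (real n)) \<longlonglongrightarrow> L"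
  shows "(\<lambda>n. G n / sqrt (real n)) \<longlonglongrightarrow> L / \<beta>"
proof -
  define eps where "eps m = S m - (1 - \<beta>)" for m
  have eps0: "eps \<longlonglongrightarrow> 0" unfolding eps_def using S by (simp add: LIM_zero)
  obtain C where C: "\<And>m. \<bar>eps m\<bar> \<le> C"
    using convergent_imp_Bseq[of eps] eps0 by (auto simp: convergent_def Bseq_def)
  have G0: "0 \<le> G n" for n unfolding Gdef by (intro sum_nonneg g)
  have key: "\<exists>R. \<forall>n. \<bar>\<beta> * G n - Gb n\<bar> \<le> \<delta> * G n + R" if d: "\<delta> > 0" for \<delta>
  proof -
    obtain K where K: "\<And>m. m \<ge> K \<Longrightarrow> \<bar>eps m\<bar> \<le> \<delta>"
      using eps0 d unfolding LIMSEQ_def dist_real_def by (metis diff_zero less_eq_real_def)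
    have "\<bar>\<beta> * G n - Gb n\<bar> \<le> \<delta> * G n + (\<bar>1 - \<beta>\<bar> + real K * C)" for n
    proof -
      have sj: "(\<Sum>j<n. g n j) = G n - g n n" unfolding Gdef by (simp add: lessThan_Suc_atMost[symmetric])
      have ge: "(\<Sum>j<n. g n j * eps (n - 1 - j)) = (\<Sum>j<n. g n j * S (n - 1 - j)) - (\<Sum>j<n. (1 - \<beta>) * g n j)"
        unfolding sum_subtractf[symmetric] by (rule sum.cong) (auto simp: eps_def algebra_simps)
      have "(\<Sum>j<n. (1 - \<beta>) * g n j) = (1 - \<beta>) * (\<Sum>j<n. g n j)" by (simp add: sum_distrib_left)
      then have "G n = Gb n + (1 - \<beta>) * (\<Sum>j<n. g n j) + (\<Sum>j<n. g n j * eps (n - 1 - j))"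
        using dec[of n] ge by linarith
      then have eq: "\<beta> * G n - Gb n = - (1 - \<beta>) * g n n + (\<Sum>j<n. g n j * eps (n - 1 - j))"
        unfolding sj by (simp add: algebra_simps)
      have t1: "\<bar>- (1 - \<beta>) * g n n\<bar> \<le> \<bar>1 - \<beta>\<bar>"
      proof -
        have "\<bar>1 - \<beta>\<bar> * g n n \<le> \<bar>1 - \<beta>\<bar> * 1" using g[of n n] by (intro mult_left_mono) auto
        moreover have "\<bar>- (1 - \<beta>) * g n n\<bar> = \<bar>1 - \<beta>\<bar> * g n n" using g[of n n] by (simp add: abs_mult abs_minus_commute)
        ultimately show ?thesis by simp
      qed
      have t2: "\<bar>\<Sum>j<n. g n j * eps (n - 1 - j)\<bar> \<le> \<delta> * (\<Sum>j<n. g n j) + real K * C"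
        by (rule taub_ineq[OF g C K]) (use d in auto)
      have t3: "\<delta> * (\<Sum>j<n. g n j) \<le> \<delta> * G n"
        using sj g[of n n] d by (intro mult_left_mono) auto
      show ?thesis unfolding eq using t1 t2 t3 by linarith
    qed
    then show ?thesis by blast
  qed
  define a where "a n = G n / sqrt (real n)" for n
  define b where "b n = Gb n / sqrt (real n)" for n
  have a0: "0 \<le> a n" for n unfolding a_def using G0 by simp
  have keyn: "\<exists>R. \<forall>n\<ge>1. \<bar>\<beta> * a n - b n\<bar> \<le> \<delta> * a n + R / sqrt (real n)" if d: "\<delta> > 0" for \<delta>
  proof -
    obtain R where R: "\<And>n. \<bar>\<beta> * G n - Gb n\<bar> \<le> \<delta> * G n + R" using key[OF d] by blast
    have "\<bar>\<beta> * a n - b n\<bar> \<le> \<delta> * a n + R / sqrt (real n)" if n: "n \<ge> 1" for n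
    proof -
      have sp: "sqrt (real n) > 0" using n by simp
      have "\<bar>\<beta> * a n - b n\<bar> = \<bar>\<beta> * G n - Gb n\<bar> / sqrt (real n)"
      proof -
        have "\<beta> * a n - b n = (\<beta> * G n - Gb n) / sqrt (real n)" by (simp add: a_def b_def diff_divide_distrib)
        then show ?thesis using sp by (simp add: abs_div)
      qed
      also have "\<dots> \<le> (\<delta> * G n + R) / sqrt (real n)" by (rule divide_right_mono[OF R]) (use sp in auto)
      also have "\<dots> = \<delta> * a n + R / sqrt (real n)" by (simp add: a_def add_divide_distrib)
      finally show ?thesis .
    qed
    then show ?thesis by blast
  qed
  have bL: "b \<longlonglongrightarrow> L" using Gb by (simp add: b_def[abs_def])
  obtain A where A: "A > 0" "eventually (\<lambda>n. a n \<le> A) sequentially"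
  proof -
    obtain R where R: "\<And>n. n \<ge> 1 \<Longrightarrow> \<bar>\<beta> * a n - b n\<bar> \<le> \<beta> / 2 * a n + R / sqrt (real n)"
      using keyn[of "\<beta> / 2"] \<beta> by auto
    have lim: "(\<lambda>n. 2 / \<beta> * (b n + R / sqrt (real n))) \<longlonglongrightarrow> 2 / \<beta> * (L + 0)"
      by (intro tendsto_intros bL div_sqrt_0)
    have ev1: "eventually (\<lambda>n. 2 / \<beta> * (b n + R / sqrt (real n)) < 2 / \<beta> * L + 1) sequentially"
      using order_tendstoD(2)[OF lim, of "2 / \<beta> * L + 1"] by simp
    have "eventually (\<lambda>n. a n \<le> \<bar>2 / \<beta> * L\<bar> + 1) sequentially"
      using ev1 eventually_ge_at_top[of 1]
    proof eventually_elim
      case (elim n)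
      have "\<beta> * a n - b n \<le> \<beta> / 2 * a n + R / sqrt (real n)" using R[OF elim(2)] by linarith
      moreover have "\<beta> / 2 * a n = \<beta> * a n / 2" by simp
      ultimately have "\<beta> / 2 * a n \<le> b n + R / sqrt (real n)" by linarith
      then have "a n \<le> 2 / \<beta> * (b n + R / sqrt (real n))" using \<beta> by (simp add: field_simps)
      then show ?case using elim(1) by linarith
    qed
    moreover have "0 < \<bar>2 / \<beta> * L\<bar> + 1" by (simp add: add_nonneg_pos)
    ultimately show ?thesis using that[of "\<bar>2 / \<beta> * L\<bar> + 1"] by blast
  qed
  show ?thesis unfolding a_def[symmetric]
  proof (rule LIMSEQ_I)
    fix e :: real assume e: "e > 0"
    define \<delta> where "\<delta> = e * \<beta> / (4 * A)"
    have d: "\<delta> > 0" using e \<beta> A by (simp add: \<delta>_def)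
    obtain R where R: "\<And>n. n \<ge> 1 \<Longrightarrow> \<bar>\<beta> * a n - b n\<bar> \<le> \<delta> * a n + R / sqrt (real n)"
      using keyn[OF d] by auto
    have e4: "e * \<beta> / 4 > 0" using e \<beta> by simp
    have ev_b: "eventually (\<lambda>n. \<bar>b n - L\<bar> < e * \<beta> / 4) sequentially"
      using tendstoD[OF bL e4] by (simp add: dist_real_def)
    have ev_R: "eventually (\<lambda>n. \<bar>R / sqrt (real n)\<bar> < e * \<beta> / 4) sequentially"
      using tendstoD[OF div_sqrt_0[of R] e4] by (simp add: dist_real_def)
    have "eventually (\<lambda>n. norm (a n - L / \<beta>) < e) sequentially"
      using ev_b ev_R A(2) eventually_ge_at_top[of 1]
    proof eventually_elim
      case (elim n)
      have "\<delta> * a n \<le> \<delta> * A" using elim(3) d by (intro mult_left_mono) auto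
      also have "\<delta> * A = e * \<beta> / 4" using A by (simp add: \<delta>_def)
      finally have "\<delta> * a n \<le> e * \<beta> / 4" .
      then have "\<bar>\<beta> * a n - L\<bar> < 3 * (e * \<beta> / 4)"
        using R[OF elim(4)] elim(1,2) by linarith
      then have "\<bar>\<beta> * (a n - L / \<beta>)\<bar> < 3 * (e * \<beta> / 4)" using \<beta> by (simp add: algebra_simps)
      then have "\<beta> * \<bar>a n - L / \<beta>\<bar> < \<beta> * (3 * e / 4)" using \<beta> by (simp add: abs_mult)
      then have "\<bar>a n - L / \<beta>\<bar> < 3 * e / 4" using \<beta> by (simp add: mult_less_cancel_left_pos)
      then show ?case using e by simp
    qed
    then show "\<exists>no. \<forall>n\<ge>no. norm (a n - L / \<beta>) < e" by (simp add: eventually_sequentially)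
  qed
qed


context envL
begin

lemma Vel_eq: "Vel \<mu> = (\<Sum>j\<in>IM. of_int j * p j)"
  unfolding Vel_def by (rule infsum_fin_supp) (auto simp: p_zero)

lemma sigma_eq: "sigma_a2 \<mu> = (\<Sum>j\<in>IM. (of_int j - Vel \<mu>)\<^sup>2 * p j)"
  unfolding sigma_a2_def by (rule infsum_fin_supp) (auto simp: p_zero)

lemma Aq_sigma: "Aq = sigma_a2 \<mu>"
proof -
  define V where "V = Vel \<mu>"
  define D where "D w = of_int w - V" for w :: int
  have sD: "(\<Sum>w\<in>IM. p w * D w) = 0"
    unfolding D_def V_def Vel_eq by (simp add: right_diff_distrib sum_subtractf p_sum flip: sum_distrib_right) (simp add: mult.commute)
  have "(\<Sum>y\<in>IM2. qb y * (of_int y)\<^sup>2) = (\<Sum>z\<in>IM. p z * (\<Sum>y\<in>IM2. p (z + y) * (of_int y)\<^sup>2))"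
    unfolding qb_eq by (simp add: sum_distrib_left sum_distrib_right sum.swap[of _ IM] mult.assoc)
  also have "\<dots> = (\<Sum>z\<in>IM. p z * (\<Sum>w\<in>IM. p w * (of_int (w - z))\<^sup>2))"
  proof (rule sum.cong[OF refl])
    fix z assume z: "z \<in> IM"
    have "(\<Sum>y\<in>IM2. p (z + y) * (of_int (z + y - z))\<^sup>2) = (\<Sum>w\<in>IM. p w * (of_int (w - z))\<^sup>2)"
      by (rule shiftIM[where f="\<lambda>w. p w * (of_int (w - z))\<^sup>2"]) (use z p_zero in auto)
    then show "p z * (\<Sum>y\<in>IM2. p (z + y) * (of_int y)\<^sup>2) = p z * (\<Sum>w\<in>IM. p w * (of_int (w - z))\<^sup>2)"
      by simp
  qed
  also have "\<dots> = (\<Sum>z\<in>IM. \<Sum>w\<in>IM. p z * (p w * (D w)\<^sup>2) - 2 * ((p z * D z) * (p w * D w)) + (p z * (D z)\<^sup>2) * p w)"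
    by (intro sum.cong refl) (simp add: sum_distrib_left D_def power2_eq_square algebra_simps)
  also have "\<dots> = (\<Sum>z\<in>IM. p z) * (\<Sum>w\<in>IM. p w * (D w)\<^sup>2) - 2 * ((\<Sum>z\<in>IM. p z * D z) * (\<Sum>w\<in>IM. p w * D w))
       + (\<Sum>z\<in>IM. p z * (D z)\<^sup>2) * (\<Sum>w\<in>IM. p w)"
    by (simp only: sum_product) (simp add: sum.distrib sum_subtractf sum_distrib_left)
  also have "\<dots> = 2 * (\<Sum>w\<in>IM. p w * (D w)\<^sup>2)" by (simp add: p_sum sD)
  finally have "(\<Sum>y\<in>IM2. qb y * (of_int y)\<^sup>2) = 2 * (\<Sum>w\<in>IM. p w * (D w)\<^sup>2)" .
  then show ?thesis unfolding Aq_def sigma_eq D_def V_def by (simp add: mult.commute)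
qed

lemma final_eq:
  assumes A1: "A1 \<mu>"
  shows "integral {0..2 * Aq} (\<lambda>v. 1 / sqrt (2 * pi * v) * exp (- x\<^sup>2 / (2 * v)))
     = 2 * Aq * (1 / (2 * pi) * (\<integral>s. gx x s \<partial>lborel))"
proof -
  define a where "a = Aq"
  have a: "a > 0" using Aq_pos[OF A1] by (simp add: a_def)
  define F where "F v = 1 / sqrt (2 * pi * v) * exp (- x\<^sup>2 / (2 * v))" for v
  define G where "G w = sqrt (pi / (a * w)) * exp (- x\<^sup>2 / (4 * (a * w)))" for w
  have "integral ((\<lambda>v. v / (2 * a)) ` {0..2 * a}) (\<lambda>v. F (2 * a * v)) = (1 / \<bar>2 * a\<bar>) *\<^sub>R integral {0..2 * a} F"
    by (rule integral_stretch_real) (use a in auto)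
  moreover have "(\<lambda>v. v / (2 * a)) ` {0..2 * a} = {0..1}"
  proof -
    have "(\<lambda>v. v / (2 * a)) ` {0..2 * a} = (*) (1 / (2 * a)) ` {0..2 * a}" by (rule image_cong) auto
    also have "\<dots> = {1 / (2 * a) * 0..1 / (2 * a) * (2 * a)}" by (rule image_mult_atLeastAtMost) (use a in auto)
    finally show ?thesis using a by simp
  qed
  ultimately have st: "integral {0..2 * a} F = 2 * a * integral {0..1} (\<lambda>w. F (2 * a * w))"
    using a by simp
  have FG: "F (2 * a * w) = G w / (2 * pi)" if "w \<in> {0..1}" for w
  proof (cases "w = 0")
    case True then show ?thesis by (simp add: F_def G_def)
  next
    case False
    then have w: "w > 0" using that by auto
    have e: "- x\<^sup>2 / (2 * (2 * a * w)) = - x\<^sup>2 / (4 * (a * w))" by simp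
    have "1 / sqrt (2 * pi * (2 * a * w)) = sqrt (pi / (a * w)) / (2 * pi)"
    proof -
      have "sqrt (pi / (a * w)) = sqrt pi / sqrt (a * w)" by (simp add: real_sqrt_divide)
      moreover have "sqrt (2 * pi * (2 * a * w)) = 2 * sqrt pi * sqrt (a * w)"
      proof -
        have "2 * pi * (2 * a * w) = 2\<^sup>2 * (pi * (a * w))" by (simp add: power2_eq_square mult_ac)
        then show ?thesis by (simp add: real_sqrt_mult mult_ac)
      qed
      moreover have "sqrt pi * sqrt pi = pi" by simp
      ultimately show ?thesis using a w by (simp add: field_simps)
    qed
    then show ?thesis unfolding F_def G_def e by simp
  qed
  have "integral {0..1} (\<lambda>w. F (2 * a * w)) = integral {0..1} (\<lambda>w. G w / (2 * pi))"
    by (rule integral_cong) (rule FG)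
  also have "\<dots> = integral {0..1} G / (2 * pi)" by simp
  also have "integral {0..1} G = (\<integral>w. indicator {0..1} w * G w \<partial>lborel)"
  proof -
    have si: "set_integrable lborel {0..1} G"
      using fubini_gauss(1)[OF a, of x] unfolding set_integrable_def G_def by simp
    show ?thesis using set_borel_integral_eq_integral(2)[OF si] by (simp add: set_lebesgue_integral_def)
  qed
  also have "\<dots> = (\<integral>s. gx x s \<partial>lborel)"
    using fubini_gauss(2)[OF a, of x] unfolding gx_def Egen_def G_def a_def by simp
  finally have "integral {0..1} (\<lambda>w. F (2 * a * w)) = (\<integral>s. gx x s \<partial>lborel) / (2 * pi)" .
  then show ?thesis using st unfolding F_def[abs_def] a_def by simp
qed

end

theorem lemma4p1:
  fixes M :: nat and \<mu> :: "(int \<Rightarrow> real) measure" and x :: real and xs :: "nat \<Rightarrow> int"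
  assumes "M \<ge> 1"
    and "env_law M \<mu>"
    and "A1 \<mu>"
    and "A2 M \<mu>"
    and "\<exists>B. \<forall>n. \<bar>real_of_int (xs n) - sqrt (real n) * x\<bar> \<le> B"
  shows "(\<lambda>n. Gn \<mu> n (xs n) 0 / sqrt (real n)) \<longlonglongrightarrow>
           1 / (2 * beta \<mu> * sigma_a2 \<mu>) *
           integral {0..2 * sigma_a2 \<mu>} (\<lambda>v. 1 / sqrt (2 * pi * v) * exp (- x\<^sup>2 / (2 * v)))"
proof -
  interpret envL M \<mu> by unfold_locales (use assms in auto)
  obtain B where B: "\<And>n. \<bar>real_of_int (xs n) - sqrt (real n) * x\<bar> \<le> B" using assms(5) by blast
  define L where "L = 1 / (2 * pi) * (\<integral>s. gx x s \<partial>lborel)"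
  have bpos: "beta \<mu> > 0" by (rule beta_pos[OF assms(3,4)])
  have conv: "(\<lambda>n. Gn \<mu> n (xs n) 0 / sqrt (real n)) \<longlonglongrightarrow> L / beta \<mu>"
  proof (rule taub[where g="\<lambda>n j. qp j (xs n) 0" and Gb="\<lambda>n. \<Sum>k\<le>n. Qb k (xs n) 0" and S=Sm])
    show "0 < beta \<mu>" by (rule bpos)
    show "Sm \<longlonglongrightarrow> 1 - beta \<mu>" by (rule Sm_lim[OF assms(3)])
    show "\<And>n j. 0 \<le> qp j (xs n) 0" by (rule qpow_nonneg)
    show "\<And>n j. qp j (xs n) 0 \<le> 1" by (rule qpow_le1)
    show "\<And>n. Gn \<mu> n (xs n) 0 = (\<Sum>k\<le>n. Qb k (xs n) 0) + (\<Sum>j<n. qp j (xs n) 0 * Sm (n - 1 - j))"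
      by (rule Gn_decomp)
    show "\<And>n. Gn \<mu> n (xs n) 0 = (\<Sum>j\<le>n. qp j (xs n) 0)" by (simp add: Gn_def)
    show "(\<lambda>n. (\<Sum>k\<le>n. Qb k (xs n) 0) / sqrt (real n)) \<longlonglongrightarrow> L"
      unfolding L_def by (rule main_conv(2)[OF assms(3) B])
  qed
  have "1 / (2 * beta \<mu> * sigma_a2 \<mu>) *
           integral {0..2 * sigma_a2 \<mu>} (\<lambda>v. 1 / sqrt (2 * pi * v) * exp (- x\<^sup>2 / (2 * v)))
        = 1 / (2 * beta \<mu> * Aq) * (2 * Aq * L)"
    unfolding Aq_sigma[symmetric] final_eq[OF assms(3)] L_def ..
  also have "\<dots> = L / beta \<mu>" using Aq_pos[OF assms(3)] bpos by (simp add: field_simps)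
  finally show ?thesis using conv by simp
qed


end
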